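(* Let $H$ be a strong symplectic Hilbert space and $N:\mathbb{D}\to W_+(H)$ a Nevanlinna disc, with $H_\pm$, $B$, $E$, $F^\dagger$, $F$, $K$, $\gamma_\pm$, $\varphi^\dagger_\mp$ as described in the context. Then the localized kernel $\mathcal{K}$ is given by: for $\lambda,\mu\in\mathbb{D}_+$: $\mathcal{K}(\lambda,\mu)=\dfrac{I-B(\lambda)B(\mu)^*}{1-\lambda\bar\mu}$; for $\lambda,\mu\in\mathbb{D}_-$: $\mathcal{K}(\lambda,\mu)=\dfrac{I-B(\bar\lambda)^*B(\bar\mu)}{1-\lambda\bar\mu}$; for $\lambda\in\mathbb{D}_+$, $\mu\in\mathbb{D}_-$: $\mathcal{K}(\lambda,\mu)=\dfrac{B(\lambda)-B(\bar\mu)}{\lambda-\bar\mu}$; for $\lambda\in\mathbb{D}_-$, $\mu\in\mathbb{D}_+$: $\mathcal{K}(\lambda,\mu)=\dfrac{B(\bar\lambda)^*-B(\mu)^*}{\lambda-\bar\mu}$; where in the last two cases the value at $\lambda=\bar\mu$ is understood as the limit.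
   Context: A strong symplectic Hilbert space is a complex Hilbert space $H$ with a continuous sesquilinear form $[\cdot,\cdot]$ (linear in the first variable) with $[y,x]=-\overline{[x,y]}$, non-degenerate, such that $x\mapsto[\cdot,x]$ maps $H$ onto its dual; $S^{\perp_s}=\{x:[x,y]=0\ \forall y\in S\}$. $W_+(H)$ (resp. $W_-(H)$) is the complex manifold of maximally completely positive- (resp. negative-) definite subspaces: closed $L$ maximal with $-i[x,x]>0$ (resp. $i[x,x]>0$) for $0\ne x\in L$ and with $\pm(-i[x,x])\ge c\|x\|^2$ on $L$; for $L\in W_+(H)$ one has $H=L\oplus L^{\perp_s}$ and $L^{\perp_s}\in W_-(H)$. A Nevanlinna disc is a holomorphic map $N:\mathbb{D}\to W_+(H)$. Put $H_+=N(0)$, $H_-=H_+^{\perp_s}$, with Hilbert inner products $(\cdot,\cdot)_+=-i[\cdot,\cdot]$ on $H_+$ and $(\cdot,\cdot)_-=i[\cdot,\cdot]$ on $H_-$, so $[a,b]=i(a_+,b_+)_+-i(a_-,b_-)_-$ for the components in $H=H_+\oplus H_-$. Then $N(\lambda)=\{x+B(\lambda)x:x\in H_+\}$ for a holomorphic $B:\mathbb{D}\to\mathbb{B}(H_+,H_-)$ with $\|B(\lambda)\|<1$, and $N(\lambda)^{\perp_s}=\{B(\lambda)^*x+x:x\in H_-\}$. $\mathbb{D}_\pm$ are two copies of $\mathbb{D}$; for $\lambda\in\mathbb{D}_\pm$, $\bar\lambda$ is regarded as a point of $\mathbb{D}_\mp$. Set $E_\lambda=N(\lambda)$ for $\lambda\in\mathbb{D}_+$,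 $E_\lambda=N(\bar\lambda)^{\perp_s}$ for $\lambda\in\mathbb{D}_-$, with Hermitian inner product $(\cdot,\cdot)_\lambda$ equal to $-i[\cdot,\cdot]$ on fibers over $\mathbb{D}_+$ and $i[\cdot,\cdot]$ on fibers over $\mathbb{D}_-$. Set $F^\dagger_\lambda=E_{\bar\lambda}$ (with the inner product of $E_{\bar\lambda}$, also written $(\cdot,\cdot)_\lambda$) and $F_\lambda$ = conjugate-linear continuous functionals on $F^\dagger_\lambda$, pairing $((\cdot,\cdot))$. For each $\lambda$, $H=F^\dagger_\lambda\oplus F^\dagger_{\bar\lambda}$; $\mathcal{P}_\lambda$ is the projection onto $F^\dagger_\lambda$ along $F^\dagger_{\bar\lambda}$, and $\mathcal{Q}(\lambda,\mu):F^\dagger_\mu\to F_\lambda$ is $\mathcal{Q}(\lambda,\mu)\omega=(\mathcal{P}_\lambda\omega,\cdot)_\lambda$. Kernel: $K(\lambda,\mu)=\mathcal{Q}(\lambda,\mu)/(1-\lambda\bar\mu)$ if $\lambda,\mu$ lie in the same copy, and $K(\lambda,\mu)=-\mathcal{Q}(\lambda,\mu)/(\lambda-\bar\mu)$ if they lie in different copies (at $\lambda=\bar\mu$ defined as the limit). Trivializations: $\gamma_+(\lambda)x=x+B(\lambda)x\in E_\lambda$ ($\lambda\in\mathbb{D}_+$, $x\in H_+$), $\gamma_-(\lambda)x=B(\bar\lambda)^*x+x\in E_\lambda$ ($\lambda\in\mathbb{D}_-$, $x\in H_-$). For $\lambda\in\mathbb{D}_+$, $\varphi_-^\dagger(\lambda):F_\lambda\to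 H_-$ by $(\varphi_-^\dagger(\lambda)\omega,x)_-=((\omega,\gamma_-(\bar\lambda)x))$; for $\lambda\in\mathbb{D}_-$, $\varphi_+^\dagger(\lambda):F_\lambda\to H_+$ by $(\varphi_+^\dagger(\lambda)\omega,x)_+=((\omega,\gamma_+(\bar\lambda)x))$. Localized kernel: $\mathcal{K}(\lambda,\mu)=\varphi_\sigma^\dagger(\lambda)\circ K(\lambda,\mu)\circ\gamma_\tau(\bar\mu)$, where $\sigma=-$ if $\lambda\in\mathbb{D}_+$ and $\sigma=+$ if $\lambda\in\mathbb{D}_-$, and $\tau=-$ if $\mu\in\mathbb{D}_+$ and $\tau=+$ if $\mu\in\mathbb{D}_-$. *)

theory Defs
  imports "HOL-Analysis.Analysis"
begin

class cvector = real_vector +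
  fixes scaleC :: "complex \<Rightarrow> 'a \<Rightarrow> 'a" (infixr "*\<^sub>C" 75)
  assumes scaleC_add_right: "a *\<^sub>C (x + y) = a *\<^sub>C x + a *\<^sub>C y"
    and scaleC_add_left: "(a + b) *\<^sub>C x = a *\<^sub>C x + b *\<^sub>C x"
    and scaleC_scaleC: "a *\<^sub>C (b *\<^sub>C x) = (a * b) *\<^sub>C x"
    and scaleC_one: "1 *\<^sub>C x = x"
    and scaleR_scaleC: "r *\<^sub>R x = complex_of_real r *\<^sub>C x"

class cinner_space = cvector + real_normed_vector +
  fixes cinner :: "'a \<Rightarrow> 'a \<Rightarrow> complex"
  assumes cinner_add_left: "cinner (x + y) z = cinner x z + cinner y z"
    and cinner_scaleC_left: "cinner (a *\<^sub>C x) y = a * cinner x y"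
    and cinner_commute: "cinner y x = cnj (cinner x y)"
    and cinner_ge_zero: "0 \<le> Re (cinner x x)"
    and cinner_eq_zero_iff: "cinner x x = 0 \<longleftrightarrow> x = 0"
    and norm_eq_sqrt_cinner: "norm x = sqrt (Re (cinner x x))"

class chilbert = cinner_space + complete_space

definition clinear_functional :: "('a::cvector \<Rightarrow> complex) \<Rightarrow> bool" where
  "clinear_functional f \<longleftrightarrow>
     (\<forall>x y. f (x + y) = f x + f y) \<and> (\<forall>a x. f (a *\<^sub>C x) = a * f x)"

definition bounded_functional :: "('a::real_normed_vector \<Rightarrow> complex) \<Rightarrow> bool" where
  "bounded_functional f \<longleftrightarrow> (\<exists>C. \<forall>x. cmod (f x) \<le> C * norm x)"

definition strong_symplectic :: "('a::chilbert \<Rightarrow> 'a \<Rightarrow> complex) \<Rightarrow> bool" where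
  "strong_symplectic sf \<longleftrightarrow>
     (\<forall>x y z. sf (x + y) z = sf x z + sf y z) \<and>
     (\<forall>a x y. sf (a *\<^sub>C x) y = a * sf x y) \<and>
     (\<forall>x y. sf y x = - cnj (sf x y)) \<and>
     (\<exists>C. \<forall>x y. cmod (sf x y) \<le> C * norm x * norm y) \<and>
     (\<forall>x. (\<forall>y. sf y x = 0) \<longrightarrow> x = 0) \<and>
     (\<forall>f. clinear_functional f \<and> bounded_functional f \<longrightarrow> (\<exists>x. f = (\<lambda>y. sf y x)))"

definition sperp :: "('a \<Rightarrow> 'a \<Rightarrow> complex) \<Rightarrow> 'a set \<Rightarrow> 'a set" where
  "sperp sf S = {x. \<forall>y\<in>S. sf x y = 0}"

definition csubspace :: "'a::cvector set \<Rightarrow> bool" where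
  "csubspace S \<longleftrightarrow> 0 \<in> S \<and> (\<forall>x\<in>S. \<forall>y\<in>S. x + y \<in> S) \<and> (\<forall>a. \<forall>x\<in>S. a *\<^sub>C x \<in> S)"

definition pos_def_sub :: "('a::cvector \<Rightarrow> 'a \<Rightarrow> complex) \<Rightarrow> 'a set \<Rightarrow> bool" where
  "pos_def_sub sf L \<longleftrightarrow> (\<forall>x\<in>L. x \<noteq> 0 \<longrightarrow> Re (- \<i> * sf x x) > 0)"

definition neg_def_sub :: "('a::cvector \<Rightarrow> 'a \<Rightarrow> complex) \<Rightarrow> 'a set \<Rightarrow> bool" where
  "neg_def_sub sf L \<longleftrightarrow> (\<forall>x\<in>L. x \<noteq> 0 \<longrightarrow> Re (\<i> * sf x x) > 0)"

definition Wplus :: "('a::chilbert \<Rightarrow> 'a \<Rightarrow> complex) \<Rightarrow> 'a set set" where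
  "Wplus sf = {L. closed L \<and> csubspace L \<and> pos_def_sub sf L \<and>
      (\<exists>c>0. \<forall>x\<in>L. Re (- \<i> * sf x x) \<ge> c * (norm x)\<^sup>2) \<and>
      (\<forall>M. csubspace M \<and> L \<subseteq> M \<and> pos_def_sub sf M \<longrightarrow> M = L)}"

definition Wminus :: "('a::chilbert \<Rightarrow> 'a \<Rightarrow> complex) \<Rightarrow> 'a set set" where
  "Wminus sf = {L. closed L \<and> csubspace L \<and> neg_def_sub sf L \<and>
      (\<exists>c>0. \<forall>x\<in>L. Re (\<i> * sf x x) \<ge> c * (norm x)\<^sup>2) \<and>
      (\<forall>M. csubspace M \<and> L \<subseteq> M \<and> neg_def_sub sf M \<longrightarrow> M = L)}"

definition Hp :: "(complex \<Rightarrow> 'a set) \<Rightarrow> 'a set" where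
  "Hp N = N 0"

definition Hm :: "('a \<Rightarrow> 'a \<Rightarrow> complex) \<Rightarrow> (complex \<Rightarrow> 'a set) \<Rightarrow> 'a set" where
  "Hm sf N = sperp sf (N 0)"

definition ipp :: "('a \<Rightarrow> 'a \<Rightarrow> complex) \<Rightarrow> 'a \<Rightarrow> 'a \<Rightarrow> complex" where
  "ipp sf x y = - \<i> * sf x y"

definition ipm :: "('a \<Rightarrow> 'a \<Rightarrow> complex) \<Rightarrow> 'a \<Rightarrow> 'a \<Rightarrow> complex" where
  "ipm sf x y = \<i> * sf x y"

definition nevB :: "('a::ab_group_add \<Rightarrow> 'a \<Rightarrow> complex) \<Rightarrow> (complex \<Rightarrow> 'a set) \<Rightarrow> complex \<Rightarrow> 'a \<Rightarrow> 'a" where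
  "nevB sf N l x = (THE y. y \<in> Hm sf N \<and> x + y \<in> N l)"

definition nevBadj :: "('a::ab_group_add \<Rightarrow> 'a \<Rightarrow> complex) \<Rightarrow> (complex \<Rightarrow> 'a set) \<Rightarrow> complex \<Rightarrow> 'a \<Rightarrow> 'a" where
  "nevBadj sf N l y = (THE z. z \<in> Hp N \<and> (\<forall>x\<in>Hp N. ipp sf z x = ipm sf y (nevB sf N l x)))"

text \<open>Holomorphy is
  expressed in the standard chart of W_+(H) at N(0), i.e. complex differentiability of
  l \<mapsto> B(l) in the operator norm of B(H_+,H_-).\<close>
definition nevanlinna_disc :: "('a::chilbert \<Rightarrow> 'a \<Rightarrow> complex) \<Rightarrow> (complex \<Rightarrow> 'a set) \<Rightarrow> bool" where
  "nevanlinna_disc sf N \<longleftrightarrow>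
     (\<forall>l\<in>ball 0 1. N l \<in> Wplus sf) \<and>
     (\<forall>l0\<in>ball 0 1. \<exists>T. \<forall>\<epsilon>>0. \<exists>\<delta>>0. \<forall>l\<in>ball 0 1. 0 < cmod (l - l0) \<and> cmod (l - l0) < \<delta> \<longrightarrow>
        (\<forall>x\<in>Hp N. norm (nevB sf N l x - nevB sf N l0 x - (l - l0) *\<^sub>C T x)
                      \<le> \<epsilon> * cmod (l - l0) * norm x))"

text \<open>Points of D_+ \<union> D_- are pairs (s, l): s = True for D_+, s = False for D_-,
  with cmod l < 1.  dbar (s,l) = (\<not>s, cnj l) is \<bar>l regarded in the other copy.\<close>
definition dbar :: "bool \<times> complex \<Rightarrow> bool \<times> complex" where
  "dbar p = (\<not> fst p, cnj (snd p))"

definition fibE :: "('a \<Rightarrow> 'a \<Rightarrow> complex) \<Rightarrow> (complex \<Rightarrow> 'a set) \<Rightarrow> bool \<times> complex \<Rightarrow> 'a set" where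
  "fibE sf N p = (if fst p then N (snd p) else sperp sf (N (cnj (snd p))))"

definition fib_ip :: "('a \<Rightarrow> 'a \<Rightarrow> complex) \<Rightarrow> bool \<times> complex \<Rightarrow> 'a \<Rightarrow> 'a \<Rightarrow> complex" where
  "fib_ip sf p x y = (if fst p then - \<i> * sf x y else \<i> * sf x y)"

definition Fdag :: "('a \<Rightarrow> 'a \<Rightarrow> complex) \<Rightarrow> (complex \<Rightarrow> 'a set) \<Rightarrow> bool \<times> complex \<Rightarrow> 'a set" where
  "Fdag sf N p = fibE sf N (dbar p)"

definition Fdag_ip :: "('a \<Rightarrow> 'a \<Rightarrow> complex) \<Rightarrow> bool \<times> complex \<Rightarrow> 'a \<Rightarrow> 'a \<Rightarrow> complex" where
  "Fdag_ip sf p = fib_ip sf (dbar p)"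

definition projP :: "('a::ab_group_add \<Rightarrow> 'a \<Rightarrow> complex) \<Rightarrow> (complex \<Rightarrow> 'a set) \<Rightarrow> bool \<times> complex \<Rightarrow> 'a \<Rightarrow> 'a" where
  "projP sf N p w = (THE u. u \<in> Fdag sf N p \<and> w - u \<in> Fdag sf N (dbar p))"

text \<open>Q(p,q) w = (P_p w, .)_p, a conjugate-linear functional on F^\<dagger>_p (element of F_p);
  elements of F_p are represented as functions 'a \<Rightarrow> complex (only their values on
  F^\<dagger>_p matter), and the pairing ((w, x)) is application w x.\<close>
definition Qop :: "('a::ab_group_add \<Rightarrow> 'a \<Rightarrow> complex) \<Rightarrow> (complex \<Rightarrow> 'a set) \<Rightarrow> bool \<times> complex \<Rightarrow> bool \<times> complex \<Rightarrow> 'a \<Rightarrow> 'a \<Rightarrow> complex" where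
  "Qop sf N p q w = (\<lambda>y. Fdag_ip sf p (projP sf N p w) y)"

text \<open>The kernel K(p,q) away from the points l = \<bar>m in different copies.\<close>
definition kern :: "('a::ab_group_add \<Rightarrow> 'a \<Rightarrow> complex) \<Rightarrow> (complex \<Rightarrow> 'a set) \<Rightarrow> bool \<times> complex \<Rightarrow> bool \<times> complex \<Rightarrow> 'a \<Rightarrow> 'a \<Rightarrow> complex" where
  "kern sf N p q w = (\<lambda>y.
     (if fst p = fst q then 1 / (1 - snd p * cnj (snd q)) else - 1 / (snd p - cnj (snd q)))
     * Qop sf N p q w y)"

definition gam :: "('a::ab_group_add \<Rightarrow> 'a \<Rightarrow> complex) \<Rightarrow> (complex \<Rightarrow> 'a set) \<Rightarrow> bool \<times> complex \<Rightarrow> 'a \<Rightarrow> 'a" where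
  "gam sf N p x = (if fst p then x + nevB sf N (snd p) x
                   else nevBadj sf N (cnj (snd p)) x + x)"

text \<open>phi^\<dagger>_-(p) for p in D_+ and phi^\<dagger>_+(p) for p in D_-.\<close>
definition phidag :: "('a::ab_group_add \<Rightarrow> 'a \<Rightarrow> complex) \<Rightarrow> (complex \<Rightarrow> 'a set) \<Rightarrow> bool \<times> complex \<Rightarrow> ('a \<Rightarrow> complex) \<Rightarrow> 'a" where
  "phidag sf N p w = (if fst p
     then (THE v. v \<in> Hm sf N \<and> (\<forall>x\<in>Hm sf N. ipm sf v x = w (gam sf N (dbar p) x)))
     else (THE v. v \<in> Hp N \<and> (\<forall>x\<in>Hp N. ipp sf v x = w (gam sf N (dbar p) x))))"

definition lockern_raw :: "('a::ab_group_add \<Rightarrow> 'a \<Rightarrow> complex) \<Rightarrow> (complex \<Rightarrow> 'a set) \<Rightarrow> bool \<times> complex \<Rightarrow> bool \<times> complex \<Rightarrow> 'a \<Rightarrow> 'a" where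
  "lockern_raw sf N p q x = phidag sf N p (kern sf N p q (gam sf N (dbar q) x))"

definition lockern :: "('a::{ab_group_add, t2_space} \<Rightarrow> 'a \<Rightarrow> complex) \<Rightarrow> (complex \<Rightarrow> 'a set) \<Rightarrow> bool \<times> complex \<Rightarrow> bool \<times> complex \<Rightarrow> 'a \<Rightarrow> 'a" where
  "lockern sf N p q x =
     (if fst p \<noteq> fst q \<and> snd p = cnj (snd q)
      then Lim (at (snd p)) (\<lambda>l. lockern_raw sf N (fst p, l) q x)
      else lockern_raw sf N p q x)"

end

theory Submission
  imports Defs
begin

lemma scaleC_zero_left[simp]: "0 *\<^sub>C x = (0::'a::cvector)"
  using scaleR_scaleC[of 0 x] by simp

lemma scaleC_zero_right[simp]: "a *\<^sub>C (0::'a::cvector) = 0"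
proof -
  have "a *\<^sub>C (0::'a) = a *\<^sub>C (0 + 0)" by simp
  also have "... = a *\<^sub>C 0 + a *\<^sub>C 0" by (rule scaleC_add_right)
  finally show ?thesis by simp
qed

lemma scaleC_minus_one: "(-1) *\<^sub>C x = - (x::'a::cvector)"
  using scaleR_scaleC[of "-1" x] by simp

lemma scaleC_minus_left: "(- a) *\<^sub>C x = - (a *\<^sub>C (x::'a::cvector))"
proof -
  have "(- a) *\<^sub>C x = (-1) *\<^sub>C (a *\<^sub>C x)" by (simp add: scaleC_scaleC)
  then show ?thesis by (simp add: scaleC_minus_one)
qed

lemma scaleC_minus_right: "a *\<^sub>C (- x) = - (a *\<^sub>C (x::'a::cvector))"
proof -
  have "a *\<^sub>C (- x) = a *\<^sub>C ((-1) *\<^sub>C x)" by (simp add: scaleC_minus_one)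
  also have "... = (-1) *\<^sub>C (a *\<^sub>C x)" by (simp add: scaleC_scaleC mult.commute)
  finally show ?thesis by (simp add: scaleC_minus_one)
qed

lemma scaleC_diff_right: "a *\<^sub>C (x - y) = a *\<^sub>C x - a *\<^sub>C (y::'a::cvector)"
  by (simp only: diff_conv_add_uminus scaleC_add_right scaleC_minus_right)

lemma scaleC_diff_left: "(a - b) *\<^sub>C x = a *\<^sub>C x - b *\<^sub>C (x::'a::cvector)"
  by (simp only: diff_conv_add_uminus scaleC_add_left scaleC_minus_left)

lemma csub_zero: "csubspace S \<Longrightarrow> 0 \<in> S" by (simp add: csubspace_def)
lemma csub_add: "csubspace S \<Longrightarrow> x \<in> S \<Longrightarrow> y \<in> S \<Longrightarrow> x + y \<in> S" by (simp add: csubspace_def)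
lemma csub_scale: "csubspace S \<Longrightarrow> x \<in> S \<Longrightarrow> a *\<^sub>C x \<in> S" by (simp add: csubspace_def)
lemma csub_minus: "csubspace S \<Longrightarrow> x \<in> S \<Longrightarrow> - x \<in> S"
  using csub_scale[of S x "-1"] by (simp add: scaleC_minus_one)
lemma csub_diff: "csubspace S \<Longrightarrow> x \<in> S \<Longrightarrow> y \<in> S \<Longrightarrow> x - y \<in> S"
  using csub_add[of S x "- y"] csub_minus[of S y] by simp

section \<open>symplectic form\<close>

locale ssym =
  fixes sf :: "'h::chilbert \<Rightarrow> 'h \<Rightarrow> complex"
  assumes ss: "strong_symplectic sf"
begin

lemmas ssu = ss[unfolded strong_symplectic_def]
lemma sf_add_left: "sf (x + y) z = sf x z + sf y z" using ssu[THEN conjunct1] by blast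
lemma sf_scale_left: "sf (a *\<^sub>C x) y = a * sf x y" using ssu[THEN conjunct2, THEN conjunct1] by blast
lemma sf_skew: "sf y x = - cnj (sf x y)" using ssu[THEN conjunct2, THEN conjunct2, THEN conjunct1] by blast
lemma sf_nondeg: "(\<And>y. sf y x = 0) \<Longrightarrow> x = 0"
  using ssu[THEN conjunct2, THEN conjunct2, THEN conjunct2, THEN conjunct2, THEN conjunct1] by blast
lemma sf_repr: "clinear_functional f \<Longrightarrow> bounded_functional f \<Longrightarrow> \<exists>x. f = (\<lambda>y. sf y x)"
  using ssu[THEN conjunct2, THEN conjunct2, THEN conjunct2, THEN conjunct2, THEN conjunct2] by blast
lemma sf_bound_ex: "\<exists>C\<ge>0. \<forall>x y. cmod (sf x y) \<le> C * norm x * norm y"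
proof -
  obtain C where C: "\<forall>x y. cmod (sf x y) \<le> C * norm x * norm y"
    using ssu[THEN conjunct2, THEN conjunct2, THEN conjunct2, THEN conjunct1] by blast
  show ?thesis
  proof (intro exI[of _ "max C 0"] conjI allI)
    fix x y :: 'h
    have "C * norm x * norm y \<le> max C 0 * norm x * norm y"
      by (simp add: mult_right_mono)
    then show "cmod (sf x y) \<le> max C 0 * norm x * norm y" using C by (meson order_trans)
  qed simp
qed

lemma sf_add_right: "sf x (y + z) = sf x y + sf x z"
proof -
  have "sf x (y + z) = - cnj (sf (y + z) x)" by (rule sf_skew)
  also have "... = - cnj (sf y x) - cnj (sf z x)" by (simp add: sf_add_left)
  also have "... = sf x y + sf x z" by (simp add: sf_skew[of x y] sf_skew[of x z])
  finally show ?thesis .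
qed
lemma sf_scale_right: "sf x (a *\<^sub>C y) = cnj a * sf x y"
proof -
  have "sf x (a *\<^sub>C y) = - cnj (sf (a *\<^sub>C y) x)" by (rule sf_skew)
  also have "... = cnj a * (- cnj (sf y x))" by (simp add: sf_scale_left)
  also have "... = cnj a * sf x y" by (simp add: sf_skew[of x y])
  finally show ?thesis .
qed
lemma sf_zero_left[simp]: "sf 0 y = 0" using sf_scale_left[of 0 0 y] by simp
lemma sf_zero_right[simp]: "sf y 0 = 0" using sf_scale_right[of y 0 0] by simp
lemma sf_minus_left: "sf (- x) y = - sf x y" using sf_scale_left[of "-1" x y] by (simp add: scaleC_minus_one)
lemma sf_minus_right: "sf x (- y) = - sf x y" using sf_scale_right[of x "-1" y] by (simp add: scaleC_minus_one)
lemma sf_diff_left: "sf (x - y) z = sf x z - sf y z"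
  by (simp only: diff_conv_add_uminus sf_add_left sf_minus_left)
lemma sf_diff_right: "sf x (y - z) = sf x y - sf x z"
  by (simp only: diff_conv_add_uminus sf_add_right sf_minus_right)
lemma sf_self_re: "Re (sf x x) = 0"
proof -
  have "Re (sf x x) = Re (- cnj (sf x x))" using sf_skew[of x x] by simp
  then show ?thesis by simp
qed

end

lemma quad_lower:
  fixes c M t :: real assumes "c > 0"
  shows "- (M^2 / c) \<le> c * t^2 - 2 * M * t"
proof -
  have "0 \<le> (c * t - M)^2" by simp
  then have "0 \<le> c * (c * t^2 - 2 * M * t) + M^2" by (simp add: power2_eq_square algebra_simps)
  then show ?thesis using assms by (simp add: field_simps)
qed

lemma riesz_rep:
  fixes q :: "'a::chilbert \<Rightarrow> 'a \<Rightarrow> complex" and S :: "'a set" and f :: "'a \<Rightarrow> complex"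
  assumes qadd: "\<And>x y z. q (x + y) z = q x z + q y z"
  and qscale: "\<And>a x y. q (a *\<^sub>C x) y = a * q x y"
  and qherm: "\<And>x y. q y x = cnj (q x y)"
  and qbound: "\<And>x y. cmod (q x y) \<le> C * norm x * norm y"
  and Ssub: "csubspace S" and Scl: "closed S"
  and cpos: "c > 0" and Spos: "\<And>x. x \<in> S \<Longrightarrow> c * (norm x)^2 \<le> Re (q x x)"
  and fadd: "\<And>x y. x \<in> S \<Longrightarrow> y \<in> S \<Longrightarrow> f (x + y) = f x + f y"
  and fscale: "\<And>a x. x \<in> S \<Longrightarrow> f (a *\<^sub>C x) = cnj a * f x"
  and fbound: "\<And>x. x \<in> S \<Longrightarrow> cmod (f x) \<le> M * norm x"
  shows "\<exists>u\<in>S. \<forall>y\<in>S. q u y = f y"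
proof -
  have qaddr: "q x (y + z) = q x y + q x z" for x y z
  proof -
    have "q x (y + z) = cnj (q (y + z) x)" by (rule qherm)
    also have "... = cnj (q y x) + cnj (q z x)" by (simp add: qadd)
    also have "... = q x y + q x z" by (simp add: qherm[of y x] qherm[of z x])
    finally show ?thesis .
  qed
  have qscaler: "q x (a *\<^sub>C y) = cnj a * q x y" for a x y
  proof -
    have "q x (a *\<^sub>C y) = cnj (q (a *\<^sub>C y) x)" by (rule qherm)
    also have "... = cnj a * q x y" by (simp add: qscale qherm[of y x])
    finally show ?thesis .
  qed
  have qminus: "q (- x) y = - q x y" for x y using qscale[of "-1" x y] by (simp add: scaleC_minus_one)
  have qminusr: "q x (- y) = - q x y" for x y using qscaler[of x "-1" y] by (simp add: scaleC_minus_one)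
  have qdiff: "q (x - y) z = q x z - q y z" for x y z
    by (simp only: diff_conv_add_uminus qadd qminus)
  have qdiffr: "q x (y - z) = q x y - q x z" for x y z
    by (simp only: diff_conv_add_uminus qaddr qminusr)
  have qreal: "Re (q x y) = Re (q y x)" for x y by (simp add: qherm[of x y])
  have f0: "f 0 = 0" using fscale[of 0 0] csub_zero[OF Ssub] by simp
  have fminus: "x \<in> S \<Longrightarrow> f (- x) = - f x" for x using fscale[of x "-1"] by (simp add: scaleC_minus_one)
  have fdiff: "x \<in> S \<Longrightarrow> y \<in> S \<Longrightarrow> f (x - y) = f x - f y" for x y
    using fadd[of x "- y"] fminus[of y] csub_minus[OF Ssub, of y] by simp
  define E where "E x = Re (q x x) - 2 * Re (f x)" for x
  have Elow: "- (M^2 / c) \<le> E x" if "x \<in> S" for x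
  proof -
    have "Re (f x) \<le> M * norm x" using fbound[OF that] complex_Re_le_cmod[of "f x"] by linarith
    then have "c * (norm x)^2 - 2 * M * norm x \<le> E x" using Spos[OF that] unfolding E_def by linarith
    then show ?thesis using quad_lower[OF cpos, of M "norm x"] by linarith
  qed
  have Eshift: "E (x + z) = E x + 2 * Re (q z x) + Re (q z z) - 2 * Re (f z)" if "x \<in> S" "z \<in> S" for x z
  proof -
    have "q (x + z) (x + z) = q x x + q x z + q z x + q z z" by (simp add: qadd qaddr)
    then have "Re (q (x + z) (x + z)) = Re (q x x) + 2 * Re (q z x) + Re (q z z)"
      using qreal[of x z] by simp
    moreover have "f (x + z) = f x + f z" using fadd that by simp
    ultimately show ?thesis unfolding E_def by simp
  qed
  have S0: "0 \<in> S" using csub_zero[OF Ssub] .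
  have bdd: "bdd_below (E ` S)" using Elow by (auto intro!: bdd_belowI2)
  have ne: "E ` S \<noteq> {}" using S0 by blast
  define m where "m = Inf (E ` S)"
  have mle: "x \<in> S \<Longrightarrow> m \<le> E x" for x unfolding m_def using bdd by (simp add: cInf_lower)
  have "\<forall>n. \<exists>x\<in>S. E x < m + 1 / real (Suc n)"
  proof
    fix n
    have "Inf (E ` S) < m + 1 / real (Suc n)" unfolding m_def by simp
    then show "\<exists>x\<in>S. E x < m + 1 / real (Suc n)" using cInf_less_iff[OF ne bdd] by blast
  qed
  then obtain u where uS: "\<And>n. u n \<in> S" and uE: "\<And>n. E (u n) < m + 1 / real (Suc n)"
    by metis
  have par: "c * (norm (a - b))^2 \<le> 2 * (E a + E b - 2 * m)" if "a \<in> S" "b \<in> S" for a b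
  proof -
    define h where "h = (1/2::real) *\<^sub>R (a + b)"
    define d where "d = (1/2::real) *\<^sub>R (a - b)"
    have hS: "h \<in> S" unfolding h_def scaleR_scaleC using csub_scale[OF Ssub] csub_add[OF Ssub that] by blast
    have dS: "d \<in> S" unfolding d_def scaleR_scaleC using csub_scale[OF Ssub] csub_diff[OF Ssub that] by blast
    have mdS: "- d \<in> S" using csub_minus[OF Ssub dS] .
    have e1: "(a + b) + (a - b) = (2::real) *\<^sub>R a" by (simp add: scaleR_2)
    have e2: "(a + b) - (a - b) = (2::real) *\<^sub>R b" by (simp add: scaleR_2)
    have "h + d = (1/2::real) *\<^sub>R ((a + b) + (a - b))" unfolding h_def d_def by (simp only: scaleR_add_right)
    then have ha: "a = h + d" using e1 by simp
    have "h - d = (1/2::real) *\<^sub>R ((a + b) - (a - b))" unfolding h_def d_def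
      by (simp only: scaleR_diff_right)
    then have hb: "b = h + - d" using e2 by simp
    have Ea: "E a = E h + 2 * Re (q d h) + Re (q d d) - 2 * Re (f d)" using Eshift[OF hS dS] ha by simp
    have Eb: "E b = E h - 2 * Re (q d h) + Re (q d d) + 2 * Re (f d)"
      using Eshift[OF hS mdS] hb by (simp add: qminus qminusr fminus[OF dS])
    have qdd: "q d d = (1/4) * q (a - b) (a - b)"
      unfolding d_def scaleR_scaleC by (simp add: qscale qscaler)
    have "c * (norm (a - b))^2 \<le> Re (q (a - b) (a - b))" using Spos csub_diff[OF Ssub that] by blast
    also have "... = 4 * Re (q d d)"
    proof -
      have "q (a - b) (a - b) = 4 * q d d" using qdd by (simp add: mult.commute)
      then show ?thesis by simp
    qed
    also have "... = 2 * (E a + E b - 2 * E h)" using Ea Eb by simp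
    also have "... \<le> 2 * (E a + E b - 2 * m)" using mle[OF hS] by simp
    finally show ?thesis .
  qed
  have "Cauchy u"
  proof (rule metric_CauchyI)
    fix e :: real assume e: "e > 0"
    obtain N :: nat where N: "4 / (c * e^2) < real N" using reals_Archimedean2 by blast
    have "\<forall>j\<ge>N. \<forall>k\<ge>N. dist (u j) (u k) < e"
    proof (intro allI impI)
      fix j k assume j: "j \<ge> N" and k: "k \<ge> N"
      have ij: "1 / real (Suc j) \<le> 1 / real (Suc N)" using j by (simp add: frac_le)
      have ik: "1 / real (Suc k) \<le> 1 / real (Suc N)" using k by (simp add: frac_le)
      have "c * (norm (u j - u k))^2 \<le> 2 * (E (u j) + E (u k) - 2 * m)" using par uS by blast
      also have "... < 2 * (1 / real (Suc j) + 1 / real (Suc k))" using uE[of j] uE[of k] by simp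
      also have "... \<le> 4 / real (Suc N)" using ij ik by simp
      also have "... < c * e^2"
      proof -
        have "4 / (c * e^2) < real (Suc N)" using N by simp
        then show ?thesis using cpos e by (simp add: field_simps)
      qed
      finally have "(norm (u j - u k))^2 < e^2" using cpos by simp
      then have "norm (u j - u k) < e" using e by (simp add: power_less_imp_less_base)
      then show "dist (u j) (u k) < e" by (simp add: dist_norm)
    qed
    then show "\<exists>N. \<forall>j\<ge>N. \<forall>k\<ge>N. dist (u j) (u k) < e" by blast
  qed
  then obtain u0 where lim: "u \<longlonglongrightarrow> u0" using Cauchy_convergent_iff convergent_def by blast
  have u0S: "u0 \<in> S" using closed_sequentially[OF Scl] uS lim by blast
  have Ebd: "E u0 \<le> m + 1 / real (Suc n) + (2 * \<bar>C\<bar> * norm u0 + 2 * \<bar>M\<bar>) * norm (u n - u0)" for n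
  proof -
    define z where "z = u n - u0"
    have zS: "z \<in> S" unfolding z_def using csub_diff[OF Ssub uS u0S] .
    have "E (u n) = E u0 + 2 * Re (q z u0) + Re (q z z) - 2 * Re (f z)"
      using Eshift[OF u0S zS] unfolding z_def by simp
    moreover have "0 \<le> Re (q z z)" using Spos[OF zS] cpos by (meson order_trans mult_nonneg_nonneg less_imp_le zero_le_power2)
    moreover have "- Re (q z u0) \<le> \<bar>C\<bar> * norm z * norm u0"
    proof -
      have "- Re (q z u0) \<le> cmod (q z u0)" using abs_Re_le_cmod[of "q z u0"] by linarith
      also have "... \<le> C * norm z * norm u0" by (rule qbound)
      also have "... \<le> \<bar>C\<bar> * norm z * norm u0" by (simp add: mult_right_mono)
      finally show ?thesis .
    qed
    moreover have "Re (f z) \<le> \<bar>M\<bar> * norm z"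
    proof -
      have "Re (f z) \<le> cmod (f z)" by (rule complex_Re_le_cmod)
      also have "... \<le> M * norm z" by (rule fbound[OF zS])
      also have "... \<le> \<bar>M\<bar> * norm z" by (simp add: mult_right_mono)
      finally show ?thesis .
    qed
    ultimately have "E u0 \<le> E (u n) + (2 * \<bar>C\<bar> * norm u0 + 2 * \<bar>M\<bar>) * norm z"
      by (simp add: algebra_simps)
    then show ?thesis using uE[of n] unfolding z_def by simp
  qed
  have Eu0: "E u0 \<le> m"
  proof (rule ccontr)
    assume "\<not> E u0 \<le> m"
    then have e: "E u0 - m > 0" by simp
    define K where "K = 2 * \<bar>C\<bar> * norm u0 + 2 * \<bar>M\<bar> + 1"
    have "0 \<le> 2 * \<bar>C\<bar> * norm u0 + 2 * \<bar>M\<bar>" by simp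
    then have Kpos: "K > 0" unfolding K_def by linarith
    obtain n1 where n1: "\<forall>n\<ge>n1. norm (u n - u0) < (E u0 - m) / (2 * K)"
      using lim[unfolded LIMSEQ_iff] e Kpos by (meson divide_pos_pos mult_pos_pos zero_less_numeral)
    obtain n2 :: nat where n2: "2 / (E u0 - m) < real n2" using reals_Archimedean2 by blast
    define n where "n = max n1 n2"
    have "norm (u n - u0) < (E u0 - m) / (2 * K)" using n1 unfolding n_def by simp
    then have a1: "K * norm (u n - u0) < (E u0 - m) / 2" using Kpos by (simp add: field_simps)
    have a2: "(2 * \<bar>C\<bar> * norm u0 + 2 * \<bar>M\<bar>) * norm (u n - u0) \<le> K * norm (u n - u0)"
      unfolding K_def by (simp add: mult_right_mono)
    have "2 / (E u0 - m) < real (Suc n)" using n2 unfolding n_def by simp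
    then have a3: "1 / real (Suc n) < (E u0 - m) / 2" using e by (simp add: field_simps)
    have a4: "(2 * \<bar>C\<bar> * norm u0 + 2 * \<bar>M\<bar>) * norm (u n - u0) < (E u0 - m) / 2"
      using a2 a1 by (rule le_less_trans)
    have "E u0 < m + (E u0 - m) / 2 + (E u0 - m) / 2"
      using Ebd[of n] a4 a3 by (smt (verit))
    then show False by simp
  qed
  have umin: "y \<in> S \<Longrightarrow> E u0 \<le> E y" for y using Eu0 mle by (meson order_trans)
  show ?thesis
  proof (intro bexI[OF _ u0S] ballI)
    fix y assume yS: "y \<in> S"
    define d where "d = q y u0 - cnj (f y)"
    define A where "A = Re (q y y)"
    have A0: "0 \<le> A" unfolding A_def using Spos[OF yS] cpos by (meson order_trans mult_nonneg_nonneg less_imp_le zero_le_power2)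
    define s where "s = 1 / (A + 1)"
    have s0: "s > 0" unfolding s_def using A0 by simp
    have sA: "s * A < 1" unfolding s_def using A0 by (simp add: field_simps)
    define t where "t = - (complex_of_real s * cnj d)"
    define z where "z = t *\<^sub>C y"
    have zS: "z \<in> S" unfolding z_def using csub_scale[OF Ssub yS] .
    have "E u0 \<le> E (u0 + z)" using umin csub_add[OF Ssub u0S zS] by blast
    also have "E (u0 + z) = E u0 + 2 * Re (q z u0) + Re (q z z) - 2 * Re (f z)" using Eshift[OF u0S zS] .
    finally have ineq: "0 \<le> 2 * Re (q z u0) + Re (q z z) - 2 * Re (f z)" by simp
    have t1: "Re (q z u0) - Re (f z) = Re (t * d)"
    proof -
      have "q z u0 = t * q y u0" unfolding z_def by (simp add: qscale)
      moreover have "f z = cnj t * f y" unfolding z_def using fscale[OF yS] by simp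
      moreover have "Re (cnj t * f y) = Re (t * cnj (f y))"
      proof -
        have "Re (cnj t * f y) = Re (cnj (t * cnj (f y)))" by simp
        also have "... = Re (t * cnj (f y))" by (rule cnj.sel(1))
        finally show ?thesis .
      qed
      ultimately show ?thesis unfolding d_def by (simp add: right_diff_distrib)
    qed
    have t2: "Re (t * d) = - s * (cmod d)^2"
    proof -
      have "t * d = - (complex_of_real s * (cnj d * d))" unfolding t_def by (simp add: mult.assoc)
      also have "cnj d * d = complex_of_real ((cmod d)^2)" by (simp only: complex_norm_square mult.commute)
      finally show ?thesis by simp
    qed
    have t3: "Re (q z z) = s^2 * (cmod d)^2 * A"
    proof -
      have "q z z = t * cnj t * q y y" unfolding z_def by (simp add: qscale qscaler mult.assoc)
      also have "t * cnj t = complex_of_real ((cmod t)^2)" by (simp only: complex_norm_square)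
      also have "cmod t = s * cmod d" unfolding t_def using s0 by (simp add: norm_mult)
      finally show ?thesis unfolding A_def by (simp add: power_mult_distrib)
    qed
    have "0 \<le> - 2 * s * (cmod d)^2 + s^2 * (cmod d)^2 * A" using ineq t1 t2 t3 by simp
    then have "0 \<le> s * (cmod d)^2 * (s * A - 2)" by (simp add: algebra_simps power2_eq_square)
    moreover have "s * A - 2 < 0" using sA by simp
    ultimately have "s * (cmod d)^2 \<le> 0" by (simp add: mult_le_0_iff zero_le_mult_iff)
    then have "(cmod d)^2 \<le> 0" using s0 by (simp add: mult_le_0_iff)
    then have "d = 0" by simp
    then have "q y u0 = cnj (f y)" unfolding d_def by simp
    then show "q u0 y = f y" using qherm[of y u0] by simp
  qed
qed

context ssym begin

lemma sperp_mem: "g \<in> sperp sf S \<Longrightarrow> y \<in> S \<Longrightarrow> sf g y = 0" by (simp add: sperp_def)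
lemma sperp_mem2: "g \<in> sperp sf S \<Longrightarrow> y \<in> S \<Longrightarrow> sf y g = 0"
proof -
  assume a: "g \<in> sperp sf S" "y \<in> S"
  have "sf y g = - cnj (sf g y)" by (rule sf_skew)
  then show ?thesis using sperp_mem[OF a] by simp
qed

lemma sperp_csub: "csubspace (sperp sf S)"
  unfolding csubspace_def sperp_def by (simp add: sf_add_left sf_scale_left)

lemma sf_bl: "bounded_linear (\<lambda>x. sf x y)"
proof -
  obtain C where C: "C \<ge> 0" "\<forall>x y. cmod (sf x y) \<le> C * norm x * norm y" using sf_bound_ex by blast
  show ?thesis
  proof (rule bounded_linear_intro[where K = "C * norm y"])
    show "sf (x + z) y = sf x y + sf z y" for x z by (rule sf_add_left)
    show "sf (r *\<^sub>R x) y = r *\<^sub>R sf x y" for r x by (simp add: scaleR_scaleC sf_scale_left scaleR_conv_of_real)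
    show "norm (sf x y) \<le> norm x * (C * norm y)" for x using C(2)[rule_format, of x y] by (simp add: mult_ac)
  qed
qed

lemma sperp_closed: "closed (sperp sf S)"
proof -
  have "sperp sf S = (\<Inter>y\<in>S. {x. sf x y = 0})" unfolding sperp_def by blast
  moreover have "closed {x. sf x y = 0}" for y
    by (rule closed_Collect_eq) (auto intro: linear_continuous_on sf_bl)
  ultimately show ?thesis by auto
qed

lemma riesz_sf:
  assumes Scl: "closed S" and Ssub: "csubspace S" and c: "c > 0"
    and Spos: "\<And>x. x \<in> S \<Longrightarrow> c * (norm x)^2 \<le> Re (- \<i> * sf x x)"
    and fadd: "\<And>x y. x \<in> S \<Longrightarrow> y \<in> S \<Longrightarrow> f (x + y) = f x + f y"
    and fscale: "\<And>a x. x \<in> S \<Longrightarrow> f (a *\<^sub>C x) = cnj a * f x"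
    and fbound: "\<And>x. x \<in> S \<Longrightarrow> cmod (f x) \<le> M * norm x"
  shows "\<exists>u\<in>S. \<forall>y\<in>S. - \<i> * sf u y = f y"
proof -
  obtain C where C: "C \<ge> 0" "\<forall>x y. cmod (sf x y) \<le> C * norm x * norm y" using sf_bound_ex by blast
  show ?thesis
  proof (rule riesz_rep[where q = "\<lambda>x y. - \<i> * sf x y" and C = C and c = c and M = M, OF _ _ _ _ Ssub Scl c])
    show "- \<i> * sf (x + y) z = - \<i> * sf x z + - \<i> * sf y z" for x y z by (simp add: sf_add_left ring_distribs)
    show "- \<i> * sf (a *\<^sub>C x) y = a * (- \<i> * sf x y)" for a x y by (simp add: sf_scale_left)
    show "- \<i> * sf y x = cnj (- \<i> * sf x y)" for x y by (simp add: sf_skew[of x y])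
    show "cmod (- \<i> * sf x y) \<le> C * norm x * norm y" for x y using C(2) by (simp add: norm_mult)
  qed (use Spos fadd fscale fbound in auto)
qed

end

lemma Wplus_parts:
  assumes "L \<in> Wplus sf"
  shows "closed L" "csubspace L" "pos_def_sub sf L"
    "\<exists>c>0. \<forall>x\<in>L. Re (- \<i> * sf x x) \<ge> c * (norm x)\<^sup>2"
    "\<And>M. csubspace M \<Longrightarrow> L \<subseteq> M \<Longrightarrow> pos_def_sub sf M \<Longrightarrow> M = L"
  using assms unfolding Wplus_def by auto

locale nev = ssym sf for sf :: "'h::chilbert \<Rightarrow> 'h \<Rightarrow> complex" +
  fixes N :: "complex \<Rightarrow> 'h set"
  assumes nd: "nevanlinna_disc sf N"
begin

lemma WN: "l \<in> ball 0 1 \<Longrightarrow> N l \<in> Wplus sf"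
  using nd[unfolded nevanlinna_disc_def, THEN conjunct1] by blast

lemma W0: "N 0 \<in> Wplus sf" using WN by simp

lemma W_decomp:
  assumes L: "L \<in> Wplus sf"
  shows "\<exists>n\<in>L. w - n \<in> sperp sf L"
proof -
  obtain c where c: "c > 0" "\<forall>x\<in>L. Re (- \<i> * sf x x) \<ge> c * (norm x)\<^sup>2" using Wplus_parts(4)[OF L] by blast
  obtain C where C: "C \<ge> 0" "\<forall>x y. cmod (sf x y) \<le> C * norm x * norm y" using sf_bound_ex by blast
  have "\<exists>u\<in>L. \<forall>y\<in>L. - \<i> * sf u y = - \<i> * sf w y"
  proof (rule riesz_sf[OF Wplus_parts(1,2)[OF L] c(1), where M = "C * norm w"])
    show "c * (norm x)^2 \<le> Re (- \<i> * sf x x)" if "x \<in> L" for x using c(2) that by blast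
    show "- \<i> * sf w (x + y) = - \<i> * sf w x + - \<i> * sf w y" for x y by (simp add: sf_add_right ring_distribs)
    show "- \<i> * sf w (a *\<^sub>C x) = cnj a * (- \<i> * sf w x)" for a x by (simp add: sf_scale_right)
    show "cmod (- \<i> * sf w x) \<le> C * norm w * norm x" for x using C(2) by (simp add: norm_mult)
  qed
  then obtain n where n: "n \<in> L" "\<forall>y\<in>L. - \<i> * sf n y = - \<i> * sf w y" by blast
  have "w - n \<in> sperp sf L" unfolding sperp_def using n(2) by (simp add: sf_diff_left)
  then show ?thesis using n(1) by blast
qed

lemma W_inter: "L \<in> Wplus sf \<Longrightarrow> x \<in> L \<Longrightarrow> x \<in> sperp sf L \<Longrightarrow> x = 0"
  using Wplus_parts(3) sperp_mem unfolding pos_def_sub_def by fastforce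

lemma extend_posdef:
  assumes L: "csubspace L" "pos_def_sub sf L"
    and h: "\<And>n. n \<in> L \<Longrightarrow> sf h n = 0" and hpos: "Re (- \<i> * sf h h) > 0"
  defines "M \<equiv> {n + a *\<^sub>C h | n a. n \<in> L}"
  shows "csubspace M" "L \<subseteq> M" "pos_def_sub sf M"
proof -
  show "csubspace M" unfolding csubspace_def M_def
  proof (intro conjI ballI allI)
    show "0 \<in> {n + a *\<^sub>C h |n a. n \<in> L}" using csub_zero[OF L(1)] by (intro CollectI exI[of _ 0]) simp
  next
    fix x y assume "x \<in> {n + a *\<^sub>C h |n a. n \<in> L}" "y \<in> {n + a *\<^sub>C h |n a. n \<in> L}"
    then obtain n1 a1 n2 a2 where "x = n1 + a1 *\<^sub>C h" "n1 \<in> L" "y = n2 + a2 *\<^sub>C h" "n2 \<in> L" by blast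
    then have "x + y = (n1 + n2) + (a1 + a2) *\<^sub>C h" "n1 + n2 \<in> L"
      using csub_add[OF L(1)] by (auto simp: scaleC_add_left algebra_simps)
    then show "x + y \<in> {n + a *\<^sub>C h |n a. n \<in> L}" by blast
  next
    fix b x assume "x \<in> {n + a *\<^sub>C h |n a. n \<in> L}"
    then obtain n1 a1 where "x = n1 + a1 *\<^sub>C h" "n1 \<in> L" by blast
    then have "b *\<^sub>C x = b *\<^sub>C n1 + (b * a1) *\<^sub>C h" "b *\<^sub>C n1 \<in> L"
      using csub_scale[OF L(1)] by (auto simp: scaleC_add_right scaleC_scaleC)
    then show "b *\<^sub>C x \<in> {n + a *\<^sub>C h |n a. n \<in> L}" by blast
  qed
  show "L \<subseteq> M" unfolding M_def by (force intro: exI[of _ 0])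
  show "pos_def_sub sf M" unfolding pos_def_sub_def M_def
  proof (intro ballI impI)
    fix x assume "x \<in> {n + a *\<^sub>C h |n a. n \<in> L}" and x0: "x \<noteq> 0"
    then obtain n a where x: "x = n + a *\<^sub>C h" and n: "n \<in> L" by blast
    have h1: "sf h n = 0" using h[OF n] .
    have h2: "sf n h = 0" using h1 sf_skew[of h n] by simp
    have "sf x x = sf n n + a * (cnj a * sf h h)"
      unfolding x by (simp add: sf_add_left sf_add_right sf_scale_left sf_scale_right h1 h2)
    also have "a * (cnj a * sf h h) = complex_of_real ((cmod a)^2) * sf h h"
      by (simp only: complex_norm_square mult.assoc)
    finally have "Re (- \<i> * sf x x) = Re (- \<i> * sf n n) + (cmod a)^2 * Re (- \<i> * sf h h)"
      by (simp add: ring_distribs)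
    moreover have "Re (- \<i> * sf n n) \<ge> 0"
      using L(2) n unfolding pos_def_sub_def by (cases "n = 0") (auto intro: less_imp_le)
    moreover have "n \<noteq> 0 \<Longrightarrow> Re (- \<i> * sf n n) > 0" using L(2) n unfolding pos_def_sub_def by blast
    moreover have "n = 0 \<Longrightarrow> a \<noteq> 0" using x0 x by auto
    moreover have "a \<noteq> 0 \<Longrightarrow> (cmod a)^2 * Re (- \<i> * sf h h) > 0" using hpos by simp
    moreover have "(cmod a)^2 * Re (- \<i> * sf h h) \<ge> 0" using hpos by simp
    ultimately show "0 < Re (- \<i> * sf x x)" by (cases "n = 0") auto
  qed
qed

lemma Hm_nonpos:
  assumes z: "z \<in> sperp sf (N 0)"
  shows "Re (- \<i> * sf z z) \<le> 0"
proof (rule ccontr)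
  assume "\<not> Re (- \<i> * sf z z) \<le> 0"
  then have zp: "Re (- \<i> * sf z z) > 0" by simp
  note P = Wplus_parts[OF W0]
  define M where "M = {n + a *\<^sub>C z | n a. n \<in> N 0}"
  have hz: "sf z n = 0" if "n \<in> N 0" for n using sperp_mem[OF z that] .
  note E = extend_posdef[OF P(2,3) hz zp, folded M_def]
  have "M = N 0" using P(5)[OF E(1) E(2) E(3)] .
  moreover have "z \<in> M" unfolding M_def using csub_zero[OF P(2)] by (intro CollectI exI[of _ 0] exI[of _ 1]) (simp add: scaleC_one)
  ultimately have "z \<in> N 0" by simp
  then have "sf z z = 0" using sperp_mem[OF z] by blast
  then show False using zp by simp
qed

lemma keybound:
  assumes l: "l \<in> ball 0 1"
  shows "\<exists>K>0. \<forall>a b. a \<in> N 0 \<longrightarrow> b \<in> sperp sf (N 0) \<longrightarrow> a + b \<in> N l \<longrightarrow> norm (a + b) \<le> K * norm a"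
proof -
  obtain cl where cl: "cl > 0" "\<forall>x\<in>N l. Re (- \<i> * sf x x) \<ge> cl * (norm x)\<^sup>2" using Wplus_parts(4)[OF WN[OF l]] by blast
  obtain C where C: "C \<ge> 0" "\<forall>x y. cmod (sf x y) \<le> C * norm x * norm y" using sf_bound_ex by blast
  define K where "K = C / cl + 1"
  have K1: "K \<ge> 1" unfolding K_def using C(1) cl(1) by simp
  show ?thesis
  proof (intro exI[of _ K] conjI allI impI)
    show "K > 0" using K1 by simp
    fix a b assume a: "a \<in> N 0" and b: "b \<in> sperp sf (N 0)" and ab: "a + b \<in> N l"
    have s1: "sf b a = 0" using sperp_mem[OF b a] .
    have s2: "sf a b = 0" using sperp_mem2[OF b a] .
    have "sf (a + b) (a + b) = sf a a + sf b b" by (simp add: sf_add_left sf_add_right s1 s2)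
    then have "Re (- \<i> * sf (a + b) (a + b)) = Re (- \<i> * sf a a) + Re (- \<i> * sf b b)" by (simp add: ring_distribs)
    also have "... \<le> Re (- \<i> * sf a a)" using Hm_nonpos[OF b] by simp
    also have "... \<le> cmod (- \<i> * sf a a)" by (rule complex_Re_le_cmod)
    also have "... \<le> C * norm a * norm a" using C(2) by (simp add: norm_mult)
    finally have x1: "Re (- \<i> * sf (a + b) (a + b)) \<le> C * norm a * norm a" .
    have x2: "cl * (norm (a + b))^2 \<le> Re (- \<i> * sf (a + b) (a + b))" using cl(2) ab by blast
    have "cl * (norm (a + b))^2 \<le> C * norm a * norm a" using x2 x1 by (rule order_trans)
    then have "cl * (norm (a + b))^2 \<le> C * (norm a)^2" by (simp add: power2_eq_square mult.assoc)
    then have "(norm (a + b))^2 \<le> (C * (norm a)^2) / cl" using cl(1) by (simp add: pos_le_divide_eq mult.commute)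
    then have "(norm (a + b))^2 \<le> (C / cl) * (norm a)^2" by simp
    also have "... \<le> K^2 * (norm a)^2"
    proof (rule mult_right_mono)
      have k1: "C / cl \<le> K" unfolding K_def by simp
      have "K * 1 \<le> K * K" using K1 by (intro mult_left_mono) auto
      then have "K \<le> K^2" by (simp add: power2_eq_square)
      then show "C / cl \<le> K^2" using k1 by linarith
    qed simp
    also have "... = (K * norm a)^2" by (simp add: power_mult_distrib)
    finally have sq: "(norm (a + b))^2 \<le> (K * norm a)^2" .
    have "0 \<le> K * norm a" using K1 by simp
    then show "norm (a + b) \<le> K * norm a" using sq power2_le_imp_le by blast
  qed
qed

end

context nev begin

lemma graph_ex:
  assumes l: "l \<in> ball 0 1" and x: "x \<in> N 0"
  shows "\<exists>y\<in>sperp sf (N 0). x + y \<in> N l"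
proof -
  note P = Wplus_parts[OF W0]
  note L = Wplus_parts[OF WN[OF l]]
  define Hm0 where "Hm0 = sperp sf (N 0)"
  define R where "R = {a \<in> N 0. \<exists>b\<in>Hm0. a + b \<in> N l}"
  obtain c0 where c0: "c0 > 0" "\<forall>x\<in>N 0. Re (- \<i> * sf x x) \<ge> c0 * (norm x)\<^sup>2" using P(4) by blast
  obtain K where K: "K > 0" "\<forall>a b. a \<in> N 0 \<longrightarrow> b \<in> Hm0 \<longrightarrow> a + b \<in> N l \<longrightarrow> norm (a + b) \<le> K * norm a"
    using keybound[OF l] unfolding Hm0_def by blast
  obtain C where C: "C \<ge> 0" "\<forall>x y. cmod (sf x y) \<le> C * norm x * norm y" using sf_bound_ex by blast
  have Hcs: "csubspace Hm0" unfolding Hm0_def by (rule sperp_csub)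
  have Hcl: "closed Hm0" unfolding Hm0_def by (rule sperp_closed)
  have Rsub: "csubspace R"
    unfolding csubspace_def
  proof (intro conjI ballI allI)
    show "0 \<in> R" unfolding R_def using csub_zero[OF P(2)] csub_zero[OF Hcs] csub_zero[OF L(2)] by auto
  next
    fix u v assume "u \<in> R" "v \<in> R"
    then obtain b1 b2 where uv: "u \<in> N 0" "v \<in> N 0" "b1 \<in> Hm0" "b2 \<in> Hm0" "u + b1 \<in> N l" "v + b2 \<in> N l"
      unfolding R_def by blast
    have e: "(u + v) + (b1 + b2) = (u + b1) + (v + b2)" by (simp add: algebra_simps)
    have "u + v \<in> N 0" using csub_add[OF P(2) uv(1,2)] .
    moreover have "b1 + b2 \<in> Hm0" using csub_add[OF Hcs uv(3,4)] .
    moreover have "(u + v) + (b1 + b2) \<in> N l" unfolding e using csub_add[OF L(2) uv(5,6)] .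
    ultimately show "u + v \<in> R" unfolding R_def by blast
  next
    fix a u assume "u \<in> R"
    then obtain b1 where uv: "u \<in> N 0" "b1 \<in> Hm0" "u + b1 \<in> N l" unfolding R_def by blast
    have e: "a *\<^sub>C u + a *\<^sub>C b1 = a *\<^sub>C (u + b1)" by (simp add: scaleC_add_right)
    have "a *\<^sub>C u \<in> N 0" using csub_scale[OF P(2) uv(1)] .
    moreover have "a *\<^sub>C b1 \<in> Hm0" using csub_scale[OF Hcs uv(2)] .
    moreover have "a *\<^sub>C u + a *\<^sub>C b1 \<in> N l" unfolding e using csub_scale[OF L(2) uv(3)] .
    ultimately show "a *\<^sub>C u \<in> R" unfolding R_def by blast
  qed
  have Rcl: "closed R"
    unfolding closed_sequential_limits
  proof (intro allI impI)
    fix s r assume asm: "(\<forall>n. s n \<in> R) \<and> s \<longlonglongrightarrow> r"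
    then have sR: "\<forall>n. s n \<in> R" and sr: "s \<longlonglongrightarrow> r" by auto
    then have "\<forall>n. \<exists>b. b \<in> Hm0 \<and> s n + b \<in> N l" unfolding R_def by blast
    then obtain b where b: "\<And>n. b n \<in> Hm0" "\<And>n. s n + b n \<in> N l" by metis
    have sN: "\<And>n. s n \<in> N 0" using sR unfolding R_def by blast
    define t where "t n = s n + b n" for n
    have bound: "norm (t j - t k) \<le> K * norm (s j - s k)" for j k
    proof -
      have e: "t j - t k = (s j - s k) + (b j - b k)" unfolding t_def by (simp add: algebra_simps)
      have "s j - s k \<in> N 0" using csub_diff[OF P(2) sN sN] .
      moreover have "b j - b k \<in> Hm0" using csub_diff[OF Hcs b(1) b(1)] .
      moreover have "(s j - s k) + (b j - b k) \<in> N l" unfolding e[symmetric] t_def using csub_diff[OF L(2) b(2) b(2)] .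
      ultimately show ?thesis unfolding e using K(2) by blast
    qed
    have "Cauchy s" using sr by (rule LIMSEQ_imp_Cauchy)
    have "Cauchy t"
    proof (rule metric_CauchyI)
      fix e :: real assume e: "e > 0"
      have "e / K > 0" using e K(1) by simp
      then obtain M where M: "\<forall>m\<ge>M. \<forall>n\<ge>M. dist (s m) (s n) < e / K" using metric_CauchyD[OF \<open>Cauchy s\<close>] by blast
      show "\<exists>M. \<forall>m\<ge>M. \<forall>n\<ge>M. dist (t m) (t n) < e"
      proof (intro exI allI impI)
        fix m n assume "m \<ge> M" "n \<ge> M"
        then have "norm (s m - s n) < e / K" using M by (simp add: dist_norm)
        then have "norm (s m - s n) * K < e" using K(1) by (simp add: pos_less_divide_eq)
        then have "K * norm (s m - s n) < e" by (simp add: mult.commute)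
        then show "dist (t m) (t n) < e" using bound[of m n] by (simp add: dist_norm)
      qed
    qed
    then obtain n0 where tn: "t \<longlonglongrightarrow> n0" using Cauchy_convergent_iff convergent_def by blast
    have tL: "\<And>n. t n \<in> N l" using b(2) unfolding t_def .
    have n0L: "n0 \<in> N l" using closed_sequentially[OF L(1) tL tn] .
    have r0: "r \<in> N 0" using closed_sequentially[OF P(1) sN sr] .
    have "(\<lambda>n. t n - s n) \<longlonglongrightarrow> n0 - r" using tn sr by (rule tendsto_diff)
    moreover have "(\<lambda>n. t n - s n) = b" unfolding t_def by auto
    ultimately have "b \<longlonglongrightarrow> n0 - r" by simp
    then have "n0 - r \<in> Hm0" using closed_sequentially[OF Hcl, of b] b(1) by blast
    moreover have "r + (n0 - r) \<in> N l" using n0L by simp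
    ultimately show "r \<in> R" unfolding R_def using r0 by blast
  qed
  have RN: "R \<subseteq> N 0" unfolding R_def by blast
  have "\<exists>r\<in>R. \<forall>y\<in>R. - \<i> * sf r y = - \<i> * sf x y"
  proof (rule riesz_sf[OF Rcl Rsub c0(1), where M = "C * norm x"])
    show "c0 * (norm y)^2 \<le> Re (- \<i> * sf y y)" if "y \<in> R" for y using c0(2) RN that by blast
    show "- \<i> * sf x (u + v) = - \<i> * sf x u + - \<i> * sf x v" for u v by (simp add: sf_add_right ring_distribs)
    show "- \<i> * sf x (a *\<^sub>C u) = cnj a * (- \<i> * sf x u)" for a u by (simp add: sf_scale_right)
    show "cmod (- \<i> * sf x u) \<le> C * norm x * norm u" for u using C(2) by (simp add: norm_mult)
  qed
  then obtain r where r: "r \<in> R" "\<forall>y\<in>R. - \<i> * sf r y = - \<i> * sf x y" by blast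
  define h where "h = x - r"
  have hN: "h \<in> N 0" unfolding h_def using csub_diff[OF P(2) x] r(1) RN by blast
  have hR: "sf h y = 0" if "y \<in> R" for y using r(2) that by (simp add: h_def sf_diff_left)
  have hL: "sf h n = 0" if "n \<in> N l" for n
  proof -
    obtain n1 where n1: "n1 \<in> N 0" "n - n1 \<in> Hm0" using W_decomp[OF W0, of n] unfolding Hm0_def by blast
    have "n1 + (n - n1) \<in> N l" using that by simp
    then have "n1 \<in> R" unfolding R_def using n1 by blast
    then have "sf h n1 = 0" by (rule hR)
    moreover have "sf h (n - n1) = 0" using sperp_mem2[of "n - n1" "N 0" h] n1(2) hN unfolding Hm0_def by blast
    ultimately show ?thesis by (simp add: sf_diff_right)
  qed
  have "h = 0"
  proof (rule ccontr)
    assume h0: "h \<noteq> 0"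
    then have hp: "Re (- \<i> * sf h h) > 0" using P(3) hN unfolding pos_def_sub_def by blast
    define M where "M = {n + a *\<^sub>C h | n a. n \<in> N l}"
    note E = extend_posdef[OF L(2,3) hL hp, folded M_def]
    have "M = N l" using L(5)[OF E(1) E(2) E(3)] .
    moreover have "h \<in> M" unfolding M_def using csub_zero[OF L(2)]
      by (intro CollectI exI[of _ 0] exI[of _ 1]) (simp add: scaleC_one)
    ultimately have "h \<in> N l" by simp
    then have "h + 0 \<in> N l" by simp
    then have "h \<in> R" unfolding R_def using hN csub_zero[OF Hcs] by blast
    then have "sf h h = 0" by (rule hR)
    then show False using hp by simp
  qed
  then have "x \<in> R" using r(1) unfolding h_def by simp
  then show ?thesis unfolding R_def Hm0_def by blast
qed

end

context nev begin

lemma graph_uniq: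
  assumes l: "l \<in> ball 0 1" and y: "y1 \<in> sperp sf (N 0)" "y2 \<in> sperp sf (N 0)"
    and xy: "x + y1 \<in> N l" "x + y2 \<in> N l"
  shows "y1 = y2"
proof (rule ccontr)
  assume ne: "y1 \<noteq> y2"
  note L = Wplus_parts[OF WN[OF l]]
  have e: "y1 - y2 = (x + y1) - (x + y2)" by simp
  have dL: "y1 - y2 \<in> N l" unfolding e using csub_diff[OF L(2) xy] .
  have dH: "y1 - y2 \<in> sperp sf (N 0)" using csub_diff[OF sperp_csub y] .
  have "Re (- \<i> * sf (y1 - y2) (y1 - y2)) > 0" using L(3) dL ne unfolding pos_def_sub_def by simp
  then show False using Hm_nonpos[OF dH] by simp
qed

lemma B_prop:
  assumes l: "l \<in> ball 0 1" and x: "x \<in> N 0"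
  shows "nevB sf N l x \<in> sperp sf (N 0)" "x + nevB sf N l x \<in> N l"
proof -
  have ex1: "\<exists>!y. y \<in> Hm sf N \<and> x + y \<in> N l"
    unfolding Hm_def using graph_ex[OF l x] graph_uniq[OF l] by blast
  from theI'[OF ex1] show "nevB sf N l x \<in> sperp sf (N 0)" "x + nevB sf N l x \<in> N l"
    unfolding nevB_def Hm_def by auto
qed

lemma B_eq:
  assumes l: "l \<in> ball 0 1" and x: "x \<in> N 0" and y: "y \<in> sperp sf (N 0)" and xy: "x + y \<in> N l"
  shows "nevB sf N l x = y"
  using graph_uniq[OF l B_prop(1)[OF l x] y B_prop(2)[OF l x] xy] .

lemma B_add:
  assumes l: "l \<in> ball 0 1" and x: "x1 \<in> N 0" "x2 \<in> N 0"
  shows "nevB sf N l (x1 + x2) = nevB sf N l x1 + nevB sf N l x2"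
proof (rule B_eq[OF l])
  note P = Wplus_parts[OF W0]
  note L = Wplus_parts[OF WN[OF l]]
  show "x1 + x2 \<in> N 0" using csub_add[OF P(2) x] .
  show "nevB sf N l x1 + nevB sf N l x2 \<in> sperp sf (N 0)"
    using csub_add[OF sperp_csub B_prop(1)[OF l x(1)] B_prop(1)[OF l x(2)]] .
  have e: "x1 + x2 + (nevB sf N l x1 + nevB sf N l x2) = (x1 + nevB sf N l x1) + (x2 + nevB sf N l x2)"
    by (simp add: algebra_simps)
  show "x1 + x2 + (nevB sf N l x1 + nevB sf N l x2) \<in> N l"
    unfolding e using csub_add[OF L(2) B_prop(2)[OF l x(1)] B_prop(2)[OF l x(2)]] .
qed

lemma B_scale:
  assumes l: "l \<in> ball 0 1" and x: "x \<in> N 0"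
  shows "nevB sf N l (a *\<^sub>C x) = a *\<^sub>C nevB sf N l x"
proof (rule B_eq[OF l])
  note P = Wplus_parts[OF W0]
  note L = Wplus_parts[OF WN[OF l]]
  show "a *\<^sub>C x \<in> N 0" using csub_scale[OF P(2) x] .
  show "a *\<^sub>C nevB sf N l x \<in> sperp sf (N 0)" using csub_scale[OF sperp_csub B_prop(1)[OF l x]] .
  have e: "a *\<^sub>C x + a *\<^sub>C nevB sf N l x = a *\<^sub>C (x + nevB sf N l x)" by (simp add: scaleC_add_right)
  show "a *\<^sub>C x + a *\<^sub>C nevB sf N l x \<in> N l" unfolding e using csub_scale[OF L(2) B_prop(2)[OF l x]] .
qed

lemma B_bound:
  assumes l: "l \<in> ball 0 1"
  shows "\<exists>K\<ge>0. \<forall>x\<in>N 0. norm (nevB sf N l x) \<le> K * norm x"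
proof -
  obtain K where K: "K > 0" "\<forall>a b. a \<in> N 0 \<longrightarrow> b \<in> sperp sf (N 0) \<longrightarrow> a + b \<in> N l \<longrightarrow> norm (a + b) \<le> K * norm a"
    using keybound[OF l] by blast
  show ?thesis
  proof (intro exI[of _ "K + 1"] conjI ballI)
    show "0 \<le> K + 1" using K(1) by simp
    fix x assume x: "x \<in> N 0"
    have a: "norm (x + nevB sf N l x) \<le> K * norm x" using K(2) x B_prop[OF l x] by blast
    have "norm (nevB sf N l x) = norm ((x + nevB sf N l x) - x)" by simp
    also have "... \<le> norm (x + nevB sf N l x) + norm x" by (rule norm_triangle_ineq4)
    also have "... \<le> (K + 1) * norm x" using a by (simp add: algebra_simps)
    finally show "norm (nevB sf N l x) \<le> (K + 1) * norm x" .
  qed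
qed

lemma Badj_prop:
  assumes l: "l \<in> ball 0 1"
  shows "nevBadj sf N l y \<in> N 0" "\<And>x. x \<in> N 0 \<Longrightarrow> sf (nevBadj sf N l y) x = - sf y (nevB sf N l x)"
proof -
  note P = Wplus_parts[OF W0]
  obtain c0 where c0: "c0 > 0" "\<forall>x\<in>N 0. Re (- \<i> * sf x x) \<ge> c0 * (norm x)\<^sup>2" using P(4) by blast
  obtain C where C: "C \<ge> 0" "\<forall>x y. cmod (sf x y) \<le> C * norm x * norm y" using sf_bound_ex by blast
  obtain KB where KB: "KB \<ge> 0" "\<forall>x\<in>N 0. norm (nevB sf N l x) \<le> KB * norm x" using B_bound[OF l] by blast
  have "\<exists>z\<in>N 0. \<forall>x\<in>N 0. - \<i> * sf z x = \<i> * sf y (nevB sf N l x)"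
  proof (rule riesz_sf[OF P(1) P(2) c0(1), where M = "C * norm y * KB"])
    show "c0 * (norm x)^2 \<le> Re (- \<i> * sf x x)" if "x \<in> N 0" for x using c0(2) that by blast
    show "\<i> * sf y (nevB sf N l (u + v)) = \<i> * sf y (nevB sf N l u) + \<i> * sf y (nevB sf N l v)"
      if "u \<in> N 0" "v \<in> N 0" for u v using B_add[OF l that] by (simp add: sf_add_right ring_distribs)
    show "\<i> * sf y (nevB sf N l (a *\<^sub>C u)) = cnj a * (\<i> * sf y (nevB sf N l u))"
      if "u \<in> N 0" for a u using B_scale[OF l that] by (simp add: sf_scale_right)
    show "cmod (\<i> * sf y (nevB sf N l u)) \<le> C * norm y * KB * norm u" if "u \<in> N 0" for u
    proof -
      have "cmod (\<i> * sf y (nevB sf N l u)) = cmod (sf y (nevB sf N l u))" by (simp add: norm_mult)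
      also have "... \<le> C * norm y * norm (nevB sf N l u)" using C(2) by blast
      also have "... \<le> C * norm y * (KB * norm u)" using KB(2) that C(1) by (simp add: mult_left_mono)
      finally show ?thesis by (simp add: mult.assoc)
    qed
  qed
  then obtain z where z: "z \<in> N 0" "\<forall>x\<in>N 0. - \<i> * sf z x = \<i> * sf y (nevB sf N l x)" by blast
  have ex1: "\<exists>!z. z \<in> Hp N \<and> (\<forall>x\<in>Hp N. ipp sf z x = ipm sf y (nevB sf N l x))"
  proof (rule ex1I[of _ z])
    show "z \<in> Hp N \<and> (\<forall>x\<in>Hp N. ipp sf z x = ipm sf y (nevB sf N l x))"
      using z unfolding Hp_def ipp_def ipm_def by blast
  next
    fix z' assume z': "z' \<in> Hp N \<and> (\<forall>x\<in>Hp N. ipp sf z' x = ipm sf y (nevB sf N l x))"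
    then have z'0: "z' \<in> N 0" and z'e: "\<forall>x\<in>N 0. - \<i> * sf z' x = \<i> * sf y (nevB sf N l x)"
      unfolding Hp_def ipp_def ipm_def by auto
    have "\<forall>x\<in>N 0. sf (z' - z) x = 0"
    proof
      fix x assume x: "x \<in> N 0"
      have "- \<i> * sf z' x = - \<i> * sf z x" using z(2) z'e x by simp
      then have "sf z' x = sf z x" by simp
      then show "sf (z' - z) x = 0" by (simp add: sf_diff_left)
    qed
    then have "z' - z \<in> sperp sf (N 0)" unfolding sperp_def by blast
    moreover have "z' - z \<in> N 0" using csub_diff[OF P(2) z'0 z(1)] .
    ultimately have "z' - z = 0" using W_inter[OF W0] by blast
    then show "z' = z" by simp
  qed
  from theI'[OF ex1] have th: "nevBadj sf N l y \<in> N 0"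
    "\<forall>x\<in>N 0. - \<i> * sf (nevBadj sf N l y) x = \<i> * sf y (nevB sf N l x)"
    unfolding nevBadj_def Hp_def ipp_def ipm_def by auto
  show "nevBadj sf N l y \<in> N 0" using th(1) .
  fix x assume x: "x \<in> N 0"
  have "- \<i> * sf (nevBadj sf N l y) x = \<i> * sf y (nevB sf N l x)" using th(2) x by blast
  then have "\<i> * (- \<i> * sf (nevBadj sf N l y) x) = \<i> * (\<i> * sf y (nevB sf N l x))" by simp
  then show "sf (nevBadj sf N l y) x = - sf y (nevB sf N l x)" by (simp add: mult.assoc[symmetric])
qed

lemma gam_perp:
  assumes l: "l \<in> ball 0 1" and x': "x' \<in> sperp sf (N 0)"
  shows "nevBadj sf N l x' + x' \<in> sperp sf (N l)"
  unfolding sperp_def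
proof (intro CollectI ballI)
  fix n assume n: "n \<in> N l"
  obtain a where a: "a \<in> N 0" "n - a \<in> sperp sf (N 0)" using W_decomp[OF W0, of n] by blast
  have "a + (n - a) \<in> N l" using n by simp
  then have Ba: "nevB sf N l a = n - a" using B_eq[OF l a(1) a(2)] by blast
  have ne: "n = a + nevB sf N l a" using Ba by simp
  have s1: "sf (nevBadj sf N l x') a = - sf x' (nevB sf N l a)" using Badj_prop(2)[OF l a(1)] .
  have s2: "sf (nevBadj sf N l x') (nevB sf N l a) = 0"
    using sperp_mem2[OF B_prop(1)[OF l a(1)] Badj_prop(1)[OF l]] .
  have s3: "sf x' a = 0" using sperp_mem[OF x' a(1)] .
  show "sf (nevBadj sf N l x' + x') n = 0"
    unfolding ne by (simp add: sf_add_left sf_add_right s1 s2 s3)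
qed

lemma Hm_nondeg:
  assumes d: "d \<in> sperp sf (N 0)" and h: "\<And>x'. x' \<in> sperp sf (N 0) \<Longrightarrow> sf d x' = 0"
  shows "d = 0"
proof (rule sf_nondeg)
  fix y
  obtain a where a: "a \<in> N 0" "y - a \<in> sperp sf (N 0)" using W_decomp[OF W0, of y] by blast
  have "sf d y = sf d a + sf d (y - a)" by (simp add: sf_diff_right)
  also have "... = 0" using sperp_mem[OF d a(1)] h[OF a(2)] by simp
  finally have "sf d y = 0" .
  then show "sf y d = 0" using sf_skew[of d y] by simp
qed

end

lemma cnj_ball: "l \<in> ball 0 1 \<Longrightarrow> cnj l \<in> ball (0::complex) 1"
  by (simp add: mem_ball)

context nev begin

lemma projP_T:
  assumes l: "l \<in> ball 0 1"
  shows "projP sf N (True, l) w \<in> sperp sf (N l) \<and> w - projP sf N (True, l) w \<in> N l"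
proof -
  note L = Wplus_parts[OF WN[OF l]]
  have F1: "Fdag sf N (True, l) = sperp sf (N l)" by (simp add: Fdag_def fibE_def dbar_def)
  have F2: "Fdag sf N (dbar (True, l)) = N l" by (simp add: Fdag_def fibE_def dbar_def)
  obtain n where n: "n \<in> N l" "w - n \<in> sperp sf (N l)" using W_decomp[OF WN[OF l], of w] by blast
  have ex1: "\<exists>!u. u \<in> sperp sf (N l) \<and> w - u \<in> N l"
  proof (rule ex1I[of _ "w - n"])
    show "w - n \<in> sperp sf (N l) \<and> w - (w - n) \<in> N l" using n by simp
  next
    fix u assume u: "u \<in> sperp sf (N l) \<and> w - u \<in> N l"
    have d1: "u - (w - n) \<in> sperp sf (N l)" using csub_diff[OF sperp_csub] u n(2) by blast
    have e: "u - (w - n) = n - (w - u)" by (simp add: algebra_simps)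
    have d2: "u - (w - n) \<in> N l" unfolding e using csub_diff[OF L(2) n(1)] u by blast
    have "u - (w - n) = 0" using W_inter[OF WN[OF l] d2 d1] .
    then show "u = w - n" by simp
  qed
  show ?thesis using theI'[OF ex1] unfolding projP_def F1 F2 .
qed

lemma projP_F:
  assumes l: "l \<in> ball 0 1"
  shows "projP sf N (False, l) w \<in> N (cnj l) \<and> w - projP sf N (False, l) w \<in> sperp sf (N (cnj l))"
proof -
  have l': "cnj l \<in> ball 0 1" using cnj_ball[OF l] .
  note L = Wplus_parts[OF WN[OF l']]
  have F1: "Fdag sf N (False, l) = N (cnj l)" by (simp add: Fdag_def fibE_def dbar_def)
  have F2: "Fdag sf N (dbar (False, l)) = sperp sf (N (cnj l))" by (simp add: Fdag_def fibE_def dbar_def)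
  obtain n where n: "n \<in> N (cnj l)" "w - n \<in> sperp sf (N (cnj l))" using W_decomp[OF WN[OF l'], of w] by blast
  have ex1: "\<exists>!u. u \<in> N (cnj l) \<and> w - u \<in> sperp sf (N (cnj l))"
  proof (rule ex1I[of _ n])
    show "n \<in> N (cnj l) \<and> w - n \<in> sperp sf (N (cnj l))" using n by simp
  next
    fix u assume u: "u \<in> N (cnj l) \<and> w - u \<in> sperp sf (N (cnj l))"
    have d2: "u - n \<in> N (cnj l)" using csub_diff[OF L(2)] u n(1) by blast
    have e: "u - n = (w - n) - (w - u)" by (simp add: algebra_simps)
    have d1: "u - n \<in> sperp sf (N (cnj l))" unfolding e using csub_diff[OF sperp_csub n(2)] u by blast
    have "u - n = 0" using W_inter[OF WN[OF l'] d2 d1] .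
    then show "u = n" by simp
  qed
  show ?thesis using theI'[OF ex1] unfolding projP_def F1 F2 .
qed

lemma phidag_T:
  assumes l: "l \<in> ball 0 1" and v0: "v0 \<in> sperp sf (N 0)"
    and eq: "\<And>x'. x' \<in> sperp sf (N 0) \<Longrightarrow> \<i> * sf v0 x' = \<omega> (nevBadj sf N l x' + x')"
  shows "phidag sf N (True, l) \<omega> = v0"
proof -
  have "phidag sf N (True, l) \<omega> = (THE v. v \<in> Hm sf N \<and> (\<forall>x\<in>Hm sf N. ipm sf v x = \<omega> (nevBadj sf N l x + x)))"
    by (simp add: phidag_def gam_def dbar_def)
  also have "... = v0"
  proof (rule the_equality)
    show "v0 \<in> Hm sf N \<and> (\<forall>x\<in>Hm sf N. ipm sf v0 x = \<omega> (nevBadj sf N l x + x))"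
      using v0 eq unfolding Hm_def ipm_def by blast
  next
    fix v assume v: "v \<in> Hm sf N \<and> (\<forall>x\<in>Hm sf N. ipm sf v x = \<omega> (nevBadj sf N l x + x))"
    have d: "v - v0 \<in> sperp sf (N 0)" using csub_diff[OF sperp_csub] v v0 unfolding Hm_def by blast
    have "v - v0 = 0"
    proof (rule Hm_nondeg[OF d])
      fix x' assume x': "x' \<in> sperp sf (N 0)"
      have "\<i> * sf v x' = \<i> * sf v0 x'" using v eq[OF x'] x' unfolding Hm_def ipm_def by simp
      then show "sf (v - v0) x' = 0" by (simp add: sf_diff_left)
    qed
    then show "v = v0" by simp
  qed
  finally show ?thesis .
qed

lemma phidag_F:
  assumes l: "l \<in> ball 0 1" and v0: "v0 \<in> N 0"
    and eq: "\<And>x'. x' \<in> N 0 \<Longrightarrow> - \<i> * sf v0 x' = \<omega> (x' + nevB sf N (cnj l) x')"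
  shows "phidag sf N (False, l) \<omega> = v0"
proof -
  note P = Wplus_parts[OF W0]
  have "phidag sf N (False, l) \<omega> = (THE v. v \<in> Hp N \<and> (\<forall>x\<in>Hp N. ipp sf v x = \<omega> (x + nevB sf N (cnj l) x)))"
    by (simp add: phidag_def gam_def dbar_def)
  also have "... = v0"
  proof (rule the_equality)
    show "v0 \<in> Hp N \<and> (\<forall>x\<in>Hp N. ipp sf v0 x = \<omega> (x + nevB sf N (cnj l) x))"
      using v0 eq unfolding Hp_def ipp_def by blast
  next
    fix v assume v: "v \<in> Hp N \<and> (\<forall>x\<in>Hp N. ipp sf v x = \<omega> (x + nevB sf N (cnj l) x))"
    have d: "v - v0 \<in> N 0" using csub_diff[OF P(2)] v v0 unfolding Hp_def by blast
    have "\<forall>x'\<in>N 0. sf (v - v0) x' = 0"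
    proof
      fix x' assume x': "x' \<in> N 0"
      have "- \<i> * sf v x' = - \<i> * sf v0 x'" using v eq[OF x'] x' unfolding Hp_def ipp_def by simp
      then show "sf (v - v0) x' = 0" by (simp add: sf_diff_left)
    qed
    then have "v - v0 \<in> sperp sf (N 0)" unfolding sperp_def by blast
    then have "v - v0 = 0" using W_inter[OF W0 d] by blast
    then show "v = v0" by simp
  qed
  finally show ?thesis .
qed

lemma kern_eq: "kern sf N p q w = (\<lambda>y. (if fst p = fst q then 1 / (1 - snd p * cnj (snd q)) else - 1 / (snd p - cnj (snd q))) * Fdag_ip sf p (projP sf N p w) y)"
  by (simp add: kern_def Qop_def)

lemma raw_T:
  assumes l: "l \<in> ball 0 1" and v0: "v0 \<in> sperp sf (N 0)"
    and fac: "fac = (if True = fst q then 1 / (1 - l * cnj (snd q)) else - 1 / (l - cnj (snd q)))"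
    and eq: "\<And>x'. x' \<in> sperp sf (N 0) \<Longrightarrow> sf v0 x' = fac * sf (gam sf N (dbar q) x) (nevBadj sf N l x' + x')"
  shows "lockern_raw sf N (True, l) q x = v0"
proof -
  define w where "w = gam sf N (dbar q) x"
  define u where "u = projP sf N (True, l) w"
  have k: "kern sf N (True, l) q w = (\<lambda>y. fac * (\<i> * sf u y))"
    unfolding kern_eq fac u_def by (simp add: Fdag_ip_def fib_ip_def dbar_def)
  have "phidag sf N (True, l) (kern sf N (True, l) q w) = v0"
    unfolding k
  proof (rule phidag_T[OF l v0])
    fix x' assume x': "x' \<in> sperp sf (N 0)"
    have g: "nevBadj sf N l x' + x' \<in> sperp sf (N l)" using gam_perp[OF l x'] .
    have "sf (w - u) (nevBadj sf N l x' + x') = 0"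
      using sperp_mem2[OF g] projP_T[OF l, of w] unfolding u_def by blast
    then have "sf u (nevBadj sf N l x' + x') = sf w (nevBadj sf N l x' + x')" by (simp add: sf_diff_left)
    then show "\<i> * sf v0 x' = fac * (\<i> * sf u (nevBadj sf N l x' + x'))"
      using eq[OF x'] unfolding w_def by simp
  qed
  then show ?thesis unfolding lockern_raw_def w_def .
qed

lemma raw_F:
  assumes l: "l \<in> ball 0 1" and v0: "v0 \<in> N 0"
    and fac: "fac = (if False = fst q then 1 / (1 - l * cnj (snd q)) else - 1 / (l - cnj (snd q)))"
    and eq: "\<And>x'. x' \<in> N 0 \<Longrightarrow> sf v0 x' = fac * sf (gam sf N (dbar q) x) (x' + nevB sf N (cnj l) x')"
  shows "lockern_raw sf N (False, l) q x = v0"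
proof -
  have l': "cnj l \<in> ball 0 1" using cnj_ball[OF l] .
  define w where "w = gam sf N (dbar q) x"
  define u where "u = projP sf N (False, l) w"
  have k: "kern sf N (False, l) q w = (\<lambda>y. fac * (- \<i> * sf u y))"
    unfolding kern_eq fac u_def by (simp add: Fdag_ip_def fib_ip_def dbar_def)
  have "phidag sf N (False, l) (kern sf N (False, l) q w) = v0"
    unfolding k
  proof (rule phidag_F[OF l v0])
    fix x' assume x': "x' \<in> N 0"
    have g: "x' + nevB sf N (cnj l) x' \<in> N (cnj l)" using B_prop(2)[OF l' x'] .
    have "sf (w - u) (x' + nevB sf N (cnj l) x') = 0"
      using sperp_mem[OF _ g] projP_F[OF l, of w] unfolding u_def by blast
    then have "sf u (x' + nevB sf N (cnj l) x') = sf w (x' + nevB sf N (cnj l) x')" by (simp add: sf_diff_left)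
    then show "- \<i> * sf v0 x' = fac * (- \<i> * sf u (x' + nevB sf N (cnj l) x'))"
      using eq[OF x'] unfolding w_def by simp
  qed
  then show ?thesis unfolding lockern_raw_def w_def .
qed

end

lemma aux_neg_div: "- ((b - a) / d) = (a - b) / (d::complex)"
  by (simp only: minus_divide_left minus_diff_eq)

context nev begin

lemma adj_swap:
  assumes l: "l \<in> ball 0 1" and z: "z \<in> N 0"
  shows "sf z (nevBadj sf N l y) = - sf (nevB sf N l z) y"
proof -
  have a: "sf (nevBadj sf N l y) z = - sf y (nevB sf N l z)" using Badj_prop(2)[OF l z] .
  have "sf z (nevBadj sf N l y) = - cnj (sf (nevBadj sf N l y) z)" by (rule sf_skew)
  also have "... = cnj (sf y (nevB sf N l z))" using a by simp
  also have "... = - sf (nevB sf N l z) y" using sf_skew[of y "nevB sf N l z"] by simp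
  finally show ?thesis .
qed

lemma case1:
  assumes l: "l \<in> ball 0 1" and m: "m \<in> ball 0 1" and x: "x \<in> sperp sf (N 0)"
  shows "lockern_raw sf N (True, l) (True, m) x
        = (1 / (1 - l * cnj m)) *\<^sub>C (x - nevB sf N l (nevBadj sf N m x))"
proof (rule raw_T[OF l])
  have z: "nevBadj sf N m x \<in> N 0" using Badj_prop(1)[OF m] .
  show "(1 / (1 - l * cnj m)) *\<^sub>C (x - nevB sf N l (nevBadj sf N m x)) \<in> sperp sf (N 0)"
    using csub_scale[OF sperp_csub csub_diff[OF sperp_csub x B_prop(1)[OF l z]]] .
  show "1 / (1 - l * cnj m) = (if True = fst (True, m) then 1 / (1 - l * cnj (snd (True, m))) else - 1 / (l - cnj (snd (True, m))))"
    by simp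
  fix x' assume x': "x' \<in> sperp sf (N 0)"
  have g: "gam sf N (dbar (True, m)) x = nevBadj sf N m x + x" by (simp add: gam_def dbar_def)
  have a1: "sf (nevBadj sf N m x) x' = 0" using sperp_mem2[OF x' z] .
  have a2: "sf x (nevBadj sf N l x') = 0" using sperp_mem[OF x Badj_prop(1)[OF l]] .
  have a3: "sf (nevBadj sf N m x) (nevBadj sf N l x') = - sf (nevB sf N l (nevBadj sf N m x)) x'"
    using adj_swap[OF l z] .
  show "sf ((1 / (1 - l * cnj m)) *\<^sub>C (x - nevB sf N l (nevBadj sf N m x))) x'
      = (1 / (1 - l * cnj m)) * sf (gam sf N (dbar (True, m)) x) (nevBadj sf N l x' + x')"
    unfolding g by (simp add: sf_scale_left sf_diff_left sf_add_left sf_add_right a1 a2 a3)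
qed

lemma case2:
  assumes l: "l \<in> ball 0 1" and m: "m \<in> ball 0 1" and x: "x \<in> N 0"
  shows "lockern_raw sf N (False, l) (False, m) x
        = (1 / (1 - l * cnj m)) *\<^sub>C (x - nevBadj sf N (cnj l) (nevB sf N (cnj m) x))"
proof (rule raw_F[OF l])
  have l': "cnj l \<in> ball 0 1" using cnj_ball[OF l] .
  have m': "cnj m \<in> ball 0 1" using cnj_ball[OF m] .
  note P = Wplus_parts[OF W0]
  show "(1 / (1 - l * cnj m)) *\<^sub>C (x - nevBadj sf N (cnj l) (nevB sf N (cnj m) x)) \<in> N 0"
    using csub_scale[OF P(2) csub_diff[OF P(2) x Badj_prop(1)[OF l']]] .
  show "1 / (1 - l * cnj m) = (if False = fst (False, m) then 1 / (1 - l * cnj (snd (False, m))) else - 1 / (l - cnj (snd (False, m))))"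
    by simp
  fix x' assume x': "x' \<in> N 0"
  have g: "gam sf N (dbar (False, m)) x = x + nevB sf N (cnj m) x" by (simp add: gam_def dbar_def)
  have a1: "sf x (nevB sf N (cnj l) x') = 0" using sperp_mem2[OF B_prop(1)[OF l' x'] x] .
  have a2: "sf (nevB sf N (cnj m) x) x' = 0" using sperp_mem[OF B_prop(1)[OF m' x] x'] .
  have a3: "sf (nevBadj sf N (cnj l) (nevB sf N (cnj m) x)) x' = - sf (nevB sf N (cnj m) x) (nevB sf N (cnj l) x')"
    using Badj_prop(2)[OF l' x'] .
  show "sf ((1 / (1 - l * cnj m)) *\<^sub>C (x - nevBadj sf N (cnj l) (nevB sf N (cnj m) x))) x'
      = (1 / (1 - l * cnj m)) * sf (gam sf N (dbar (False, m)) x) (x' + nevB sf N (cnj l) x')"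
    unfolding g by (simp add: sf_scale_left sf_diff_left sf_add_left sf_add_right a1 a2 a3)
qed

lemma case3:
  assumes l: "l \<in> ball 0 1" and m: "m \<in> ball 0 1" and x: "x \<in> N 0" and ne: "l \<noteq> cnj m"
  shows "lockern_raw sf N (True, l) (False, m) x
        = (1 / (l - cnj m)) *\<^sub>C (nevB sf N l x - nevB sf N (cnj m) x)"
proof (rule raw_T[OF l])
  have m': "cnj m \<in> ball 0 1" using cnj_ball[OF m] .
  show "(1 / (l - cnj m)) *\<^sub>C (nevB sf N l x - nevB sf N (cnj m) x) \<in> sperp sf (N 0)"
    using csub_scale[OF sperp_csub csub_diff[OF sperp_csub B_prop(1)[OF l x] B_prop(1)[OF m' x]]] .
  show "- 1 / (l - cnj m) = (if True = fst (False, m) then 1 / (1 - l * cnj (snd (False, m))) else - 1 / (l - cnj (snd (False, m))))"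
    by simp
  fix x' assume x': "x' \<in> sperp sf (N 0)"
  have g: "gam sf N (dbar (False, m)) x = x + nevB sf N (cnj m) x" by (simp add: gam_def dbar_def)
  have a1: "sf x x' = 0" using sperp_mem2[OF x' x] .
  have a2: "sf (nevB sf N (cnj m) x) (nevBadj sf N l x') = 0" using sperp_mem[OF B_prop(1)[OF m' x] Badj_prop(1)[OF l]] .
  have a3: "sf x (nevBadj sf N l x') = - sf (nevB sf N l x) x'" using adj_swap[OF l x] .
  have "sf (gam sf N (dbar (False, m)) x) (nevBadj sf N l x' + x')
      = - (sf (nevB sf N l x) x' - sf (nevB sf N (cnj m) x) x')"
    unfolding g by (simp add: sf_add_left sf_add_right a1 a2 a3)
  then have r: "(- 1 / (l - cnj m)) * sf (gam sf N (dbar (False, m)) x) (nevBadj sf N l x' + x')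
      = (1 / (l - cnj m)) * (sf (nevB sf N l x) x' - sf (nevB sf N (cnj m) x) x')" by (simp add: aux_neg_div)
  have "sf ((1 / (l - cnj m)) *\<^sub>C (nevB sf N l x - nevB sf N (cnj m) x)) x'
      = (1 / (l - cnj m)) * (sf (nevB sf N l x) x' - sf (nevB sf N (cnj m) x) x')"
    by (simp only: sf_scale_left sf_diff_left)
  then show "sf ((1 / (l - cnj m)) *\<^sub>C (nevB sf N l x - nevB sf N (cnj m) x)) x'
      = (- 1 / (l - cnj m)) * sf (gam sf N (dbar (False, m)) x) (nevBadj sf N l x' + x')"
    using r by simp
qed

lemma case4:
  assumes l: "l \<in> ball 0 1" and m: "m \<in> ball 0 1" and x: "x \<in> sperp sf (N 0)" and ne: "l \<noteq> cnj m"
  shows "lockern_raw sf N (False, l) (True, m) x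
        = (1 / (l - cnj m)) *\<^sub>C (nevBadj sf N (cnj l) x - nevBadj sf N m x)"
proof (rule raw_F[OF l])
  have l': "cnj l \<in> ball 0 1" using cnj_ball[OF l] .
  note P = Wplus_parts[OF W0]
  show "(1 / (l - cnj m)) *\<^sub>C (nevBadj sf N (cnj l) x - nevBadj sf N m x) \<in> N 0"
    using csub_scale[OF P(2) csub_diff[OF P(2) Badj_prop(1)[OF l'] Badj_prop(1)[OF m]]] .
  show "- 1 / (l - cnj m) = (if False = fst (True, m) then 1 / (1 - l * cnj (snd (True, m))) else - 1 / (l - cnj (snd (True, m))))"
    by simp
  fix x' assume x': "x' \<in> N 0"
  have g: "gam sf N (dbar (True, m)) x = nevBadj sf N m x + x" by (simp add: gam_def dbar_def)
  have a1: "sf (nevBadj sf N m x) (nevB sf N (cnj l) x') = 0"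
    using sperp_mem2[OF B_prop(1)[OF l' x'] Badj_prop(1)[OF m]] .
  have a2: "sf x x' = 0" using sperp_mem[OF x x'] .
  have a3: "sf (nevBadj sf N (cnj l) x) x' = - sf x (nevB sf N (cnj l) x')" using Badj_prop(2)[OF l' x'] .
  have "sf (gam sf N (dbar (True, m)) x) (x' + nevB sf N (cnj l) x')
      = - (sf (nevBadj sf N (cnj l) x) x' - sf (nevBadj sf N m x) x')"
    unfolding g by (simp add: sf_add_left sf_add_right a1 a2 a3)
  then have r: "(- 1 / (l - cnj m)) * sf (gam sf N (dbar (True, m)) x) (x' + nevB sf N (cnj l) x')
      = (1 / (l - cnj m)) * (sf (nevBadj sf N (cnj l) x) x' - sf (nevBadj sf N m x) x')" by (simp add: aux_neg_div)
  have "sf ((1 / (l - cnj m)) *\<^sub>C (nevBadj sf N (cnj l) x - nevBadj sf N m x)) x'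
      = (1 / (l - cnj m)) * (sf (nevBadj sf N (cnj l) x) x' - sf (nevBadj sf N m x) x')"
    by (simp only: sf_scale_left sf_diff_left)
  then show "sf ((1 / (l - cnj m)) *\<^sub>C (nevBadj sf N (cnj l) x - nevBadj sf N m x)) x'
      = (- 1 / (l - cnj m)) * sf (gam sf N (dbar (True, m)) x) (x' + nevB sf N (cnj l) x')"
    using r by simp
qed

lemma ev_ball:
  assumes m: "m \<in> ball 0 1"
  shows "eventually (\<lambda>l'. l' \<in> ball 0 1 \<and> l' \<noteq> cnj m) (at (cnj m))"
  unfolding eventually_at_topological
  by (intro exI[of _ "ball 0 1"]) (use cnj_ball[OF m] in auto)

end

theorem proposition5p2:
  fixes sf :: "'h::chilbert \<Rightarrow> 'h \<Rightarrow> complex" and N :: "complex \<Rightarrow> 'h set"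
  assumes "strong_symplectic sf" and "nevanlinna_disc sf N"
  shows
  "(\<forall>l\<in>ball 0 1. \<forall>m\<in>ball 0 1. \<forall>x\<in>Hm sf N.
      lockern sf N (True, l) (True, m) x
        = (1 / (1 - l * cnj m)) *\<^sub>C (x - nevB sf N l (nevBadj sf N m x))) \<and>
   (\<forall>l\<in>ball 0 1. \<forall>m\<in>ball 0 1. \<forall>x\<in>Hp N.
      lockern sf N (False, l) (False, m) x
        = (1 / (1 - l * cnj m)) *\<^sub>C (x - nevBadj sf N (cnj l) (nevB sf N (cnj m) x))) \<and>
   (\<forall>l\<in>ball 0 1. \<forall>m\<in>ball 0 1. \<forall>x\<in>Hp N.
      lockern sf N (True, l) (False, m) x
        = (if l \<noteq> cnj m
           then (1 / (l - cnj m)) *\<^sub>C (nevB sf N l x - nevB sf N (cnj m) x)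
           else Lim (at (cnj m))
                  (\<lambda>l'. (1 / (l' - cnj m)) *\<^sub>C (nevB sf N l' x - nevB sf N (cnj m) x)))) \<and>
   (\<forall>l\<in>ball 0 1. \<forall>m\<in>ball 0 1. \<forall>x\<in>Hm sf N.
      lockern sf N (False, l) (True, m) x
        = (if l \<noteq> cnj m
           then (1 / (l - cnj m)) *\<^sub>C (nevBadj sf N (cnj l) x - nevBadj sf N m x)
           else Lim (at (cnj m))
                  (\<lambda>l'. (1 / (l' - cnj m)) *\<^sub>C (nevBadj sf N (cnj l') x - nevBadj sf N m x))))"
proof -
  interpret nev sf N by unfold_locales (rule assms)+
  have c1: "\<forall>l\<in>ball 0 1. \<forall>m\<in>ball 0 1. \<forall>x\<in>Hm sf N.
      lockern sf N (True, l) (True, m) x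
        = (1 / (1 - l * cnj m)) *\<^sub>C (x - nevB sf N l (nevBadj sf N m x))"
  proof (intro ballI)
    fix l m :: complex and x assume l: "l \<in> ball 0 1" and m: "m \<in> ball 0 1" and x: "x \<in> Hm sf N"
    have "lockern sf N (True, l) (True, m) x = lockern_raw sf N (True, l) (True, m) x" by (simp add: lockern_def)
    then show "lockern sf N (True, l) (True, m) x = (1 / (1 - l * cnj m)) *\<^sub>C (x - nevB sf N l (nevBadj sf N m x))"
      using case1[OF l m] x unfolding Hm_def by simp
  qed
  have c2: "\<forall>l\<in>ball 0 1. \<forall>m\<in>ball 0 1. \<forall>x\<in>Hp N.
      lockern sf N (False, l) (False, m) x
        = (1 / (1 - l * cnj m)) *\<^sub>C (x - nevBadj sf N (cnj l) (nevB sf N (cnj m) x))"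
  proof (intro ballI)
    fix l m :: complex and x assume l: "l \<in> ball 0 1" and m: "m \<in> ball 0 1" and x: "x \<in> Hp N"
    have "lockern sf N (False, l) (False, m) x = lockern_raw sf N (False, l) (False, m) x" by (simp add: lockern_def)
    then show "lockern sf N (False, l) (False, m) x = (1 / (1 - l * cnj m)) *\<^sub>C (x - nevBadj sf N (cnj l) (nevB sf N (cnj m) x))"
      using case2[OF l m] x unfolding Hp_def by simp
  qed
  have c3: "\<forall>l\<in>ball 0 1. \<forall>m\<in>ball 0 1. \<forall>x\<in>Hp N.
      lockern sf N (True, l) (False, m) x
        = (if l \<noteq> cnj m
           then (1 / (l - cnj m)) *\<^sub>C (nevB sf N l x - nevB sf N (cnj m) x)
           else Lim (at (cnj m))
                  (\<lambda>l'. (1 / (l' - cnj m)) *\<^sub>C (nevB sf N l' x - nevB sf N (cnj m) x)))"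
  proof (intro ballI)
    fix l m :: complex and x assume l: "l \<in> ball 0 1" and m: "m \<in> ball 0 1" and x: "x \<in> Hp N"
    have x0: "x \<in> N 0" using x unfolding Hp_def .
    show "lockern sf N (True, l) (False, m) x
        = (if l \<noteq> cnj m
           then (1 / (l - cnj m)) *\<^sub>C (nevB sf N l x - nevB sf N (cnj m) x)
           else Lim (at (cnj m))
                  (\<lambda>l'. (1 / (l' - cnj m)) *\<^sub>C (nevB sf N l' x - nevB sf N (cnj m) x)))"
    proof (cases "l = cnj m")
      case False
      then have "lockern sf N (True, l) (False, m) x = lockern_raw sf N (True, l) (False, m) x" by (simp add: lockern_def)
      then show ?thesis using case3[OF l m x0 False] False by simp
    next
      case True
      then have e: "lockern sf N (True, l) (False, m) x = Lim (at (cnj m)) (\<lambda>l'. lockern_raw sf N (True, l') (False, m) x)"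
        by (simp add: lockern_def)
      have ev: "eventually (\<lambda>l'. lockern_raw sf N (True, l') (False, m) x
          = (1 / (l' - cnj m)) *\<^sub>C (nevB sf N l' x - nevB sf N (cnj m) x)) (at (cnj m))"
        using ev_ball[OF m] by (rule eventually_mono) (use case3[OF _ m x0] in blast)
      show ?thesis unfolding e using Lim_cong[OF ev refl] True by simp
    qed
  qed
  have c4: "\<forall>l\<in>ball 0 1. \<forall>m\<in>ball 0 1. \<forall>x\<in>Hm sf N.
      lockern sf N (False, l) (True, m) x
        = (if l \<noteq> cnj m
           then (1 / (l - cnj m)) *\<^sub>C (nevBadj sf N (cnj l) x - nevBadj sf N m x)
           else Lim (at (cnj m))
                  (\<lambda>l'. (1 / (l' - cnj m)) *\<^sub>C (nevBadj sf N (cnj l') x - nevBadj sf N m x)))"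
  proof (intro ballI)
    fix l m :: complex and x assume l: "l \<in> ball 0 1" and m: "m \<in> ball 0 1" and x: "x \<in> Hm sf N"
    have x0: "x \<in> sperp sf (N 0)" using x unfolding Hm_def .
    show "lockern sf N (False, l) (True, m) x
        = (if l \<noteq> cnj m
           then (1 / (l - cnj m)) *\<^sub>C (nevBadj sf N (cnj l) x - nevBadj sf N m x)
           else Lim (at (cnj m))
                  (\<lambda>l'. (1 / (l' - cnj m)) *\<^sub>C (nevBadj sf N (cnj l') x - nevBadj sf N m x)))"
    proof (cases "l = cnj m")
      case False
      then have "lockern sf N (False, l) (True, m) x = lockern_raw sf N (False, l) (True, m) x" by (simp add: lockern_def)
      then show ?thesis using case4[OF l m x0 False] False by simp
    next
      case True
      then have e: "lockern sf N (False, l) (True, m) x = Lim (at (cnj m)) (\<lambda>l'. lockern_raw sf N (False, l') (True, m) x)"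
        by (simp add: lockern_def)
      have ev: "eventually (\<lambda>l'. lockern_raw sf N (False, l') (True, m) x
          = (1 / (l' - cnj m)) *\<^sub>C (nevBadj sf N (cnj l') x - nevBadj sf N m x)) (at (cnj m))"
        using ev_ball[OF m] by (rule eventually_mono) (use case4[OF _ m x0] in blast)
      show ?thesis unfolding e using Lim_cong[OF ev refl] True by simp
    qed
  qed
  show ?thesis using c1 c2 c3 c4 by blast
qed

end
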